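(* Let $2\le k\le n$, let $\Omega\subset\mathbb{R}^n$ be a bounded domain, $\mathcal{D}=\overline{\Omega}\times\mathbb{R}\times\mathbb{R}^n$. Suppose $A(x,z,p)$ (symmetric matrix valued) and $f(x,z,p)$ are continuous on $\mathcal{D}$, $f>0$ on $\mathcal{D}$, and $B(x,z,p)$ (skew-symmetric matrix valued) is bounded and continuous on $\mathcal{D}$. Let $u\in C^2(\overline{\Omega})$ be a strictly admissible solution of $$S_k\big(D^2u-A(x,u,Du)-B(x,u,Du)\big)=f(x,u,Du)\quad\text{in }\overline{\Omega},$$ and suppose there exist $M_0,M_1>0$ with $\sup_{\overline{\Omega}}|u|\le M_0$, $\sup_{\overline{\Omega}}|Du|\le M_1$. Set $$f_0=\inf_{x\in\overline\Omega,\ |z|\le M_0,\ |p|\le M_1} f(x,z,p),\qquad f_1=\sup_{x\in\overline\Omega,\ |z|\le M_0,\ |p|\le M_1} f(x,z,p).$$ Then for every $x\in\overline{\Omega}$: (i) $0<\lambda_{\min}(\omega(x,u))\le \big[f_1/\binom{n}{k}\big]^{1/k}$; (ii) if $u$ is $\delta$-admissible ($0<\delta<1$), then in addition $\big[(1+\delta^2)^{-[k/2]}f_0/\binom{n}{k}\big]^{1/k}\le \lambda_{\max}(\omega(x,u))$; (iii) if $u$ is $\widetilde\gamma_k$-admissible ($0<\widetilde\gamma_k<1$), then in addition $\lambda_{\max}(\omega(x,u))\le \frac{1}{\widetilde\gamma_k}\big[f_1/\binom{n}{k}\big]^{1/k}$; (iv) if $u$ is $(\delta,\widetilde\gamma_k)$-admissible,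 then $$\widetilde\gamma_k\Big[\tfrac{(1+\delta^2)^{-[k/2]}f_0}{\binom nk}\Big]^{1/k}\le\lambda_{\min}(\omega(x,u))\le\Big[\tfrac{f_1}{\binom nk}\Big]^{1/k},\qquad \Big[\tfrac{(1+\delta^2)^{-[k/2]}f_0}{\binom nk}\Big]^{1/k}\le\lambda_{\max}(\omega(x,u))\le\tfrac{1}{\widetilde\gamma_k}\Big[\tfrac{f_1}{\binom nk}\Big]^{1/k}.$$
   Context: For $R\in\mathbb{R}^{n\times n}$, $S_k(R)=\sigma_k(\lambda(R))$, where $\lambda(R)\in\mathbb{C}^n$ are the eigenvalues of $R$ and $\sigma_k(\lambda)=\sum_{1\le i_1<\dots<i_k\le n}\lambda_{i_1}\cdots\lambda_{i_k}$ (equivalently, the sum of the principal $k\times k$ minors of $R$). $[a]$ denotes the integer part. For $u\in C^2(\overline\Omega)$ set $\omega(x,u)=D^2u(x)-A(x,u(x),Du(x))$ (symmetric) and $R(x,u)=\omega(x,u)-B(x,u(x),Du(x))$. Set $\lambda_u=\inf_{x\in\overline\Omega}\lambda_{\min}(\omega(x,u))$, $\gamma_u=\inf_{x\in\overline\Omega}\lambda_{\min}(\omega(x,u))/\lambda_{\max}(\omega(x,u))$, and $\mu(B)=\sup_{\mathcal D}\|B(x,z,p)\|$ (operator norm). A function $u\in C^2(\overline\Omega)$ is strictly admissible if $\lambda_u>0$; $\delta$-admissible ($0<\delta<1$) if strictly admissible and $\mu(B)\le\delta\lambda_u$; $\widetilde\gamma_k$-admissible ($0<\widetilde\gamma_k<1$)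 if strictly admissible and $\gamma_u\ge\widetilde\gamma_k$; $(\delta,\widetilde\gamma_k)$-admissible if both $\delta$-admissible and $\widetilde\gamma_k$-admissible. *)

theory Defs
  imports "HOL-Analysis.Analysis"
begin

text \<open>Determinant of the principal submatrix of R indexed by I (Leibniz formula).\<close>
definition principal_minor :: "real^'n^'n \<Rightarrow> 'n set \<Rightarrow> real" where
  "principal_minor R I =
     (\<Sum>p\<in>{p. p permutes I}. of_int (sign p) * (\<Prod>i\<in>I. R $ i $ p i))"

text \<open>S_k(R): sum of the principal k x k minors of R (= sigma_k of the eigenvalues).\<close>
definition S_k :: "nat \<Rightarrow> real^'n^'n \<Rightarrow> real" where
  "S_k k R = (\<Sum>I\<in>{I::'n set. card I = k}. principal_minor R I)"

text \<open>Real eigenvalues of a real square matrix.\<close>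
definition real_eigenvalues :: "real^'n^'n \<Rightarrow> real set" where
  "real_eigenvalues M = {l. \<exists>v. v \<noteq> 0 \<and> M *v v = l *\<^sub>R v}"

definition lambda_min :: "real^'n^'n \<Rightarrow> real" where
  "lambda_min M = Min (real_eigenvalues M)"

definition lambda_max :: "real^'n^'n \<Rightarrow> real" where
  "lambda_max M = Max (real_eigenvalues M)"

text \<open>lambda_u and gamma_u for the matrix field W x = omega(x,u) over the set S (= closure Omega).\<close>
definition lambda_u :: "(real^'n) set \<Rightarrow> (real^'n \<Rightarrow> real^'n^'n) \<Rightarrow> real" where
  "lambda_u S W = (INF x\<in>S. lambda_min (W x))"

definition gamma_u :: "(real^'n) set \<Rightarrow> (real^'n \<Rightarrow> real^'n^'n) \<Rightarrow> real" where
  "gamma_u S W = (INF x\<in>S. lambda_min (W x) / lambda_max (W x))"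

text \<open>mu(B) = sup over the domain D of the operator norm of B.\<close>
definition mu_B :: "((real^'n) \<times> real \<times> (real^'n)) set \<Rightarrow>
    (real^'n \<Rightarrow> real \<Rightarrow> real^'n \<Rightarrow> real^'n^'n) \<Rightarrow> real" where
  "mu_B D B = (SUP t\<in>D. onorm (\<lambda>v. (case t of (x, z, p) \<Rightarrow> B x z p) *v v))"

definition strictly_admissible :: "(real^'n) set \<Rightarrow> (real^'n \<Rightarrow> real^'n^'n) \<Rightarrow> bool" where
  "strictly_admissible S W \<longleftrightarrow> lambda_u S W > 0"

definition delta_admissible :: "real \<Rightarrow> (real^'n) set \<Rightarrow> (real^'n \<Rightarrow> real^'n^'n) \<Rightarrow>
    (real^'n \<Rightarrow> real \<Rightarrow> real^'n \<Rightarrow> real^'n^'n) \<Rightarrow> bool" where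
  "delta_admissible \<delta> S W B \<longleftrightarrow>
     strictly_admissible S W \<and> mu_B (S \<times> UNIV \<times> UNIV) B \<le> \<delta> * lambda_u S W"

definition gamma_admissible :: "real \<Rightarrow> (real^'n) set \<Rightarrow> (real^'n \<Rightarrow> real^'n^'n) \<Rightarrow> bool" where
  "gamma_admissible g S W \<longleftrightarrow> strictly_admissible S W \<and> gamma_u S W \<ge> g"

end

theory Submission
  imports Defs "Jordan_Normal_Form.Char_Poly"
begin


lemma sym_dot:
  fixes W :: "real^'n^'n"
  assumes "transpose W = W"
  shows "x \<bullet> (W *v y) = y \<bullet> (W *v x)"
proof -
  have "x \<bullet> (W *v y) = (x v* W) \<bullet> y" by (simp add: dot_lmul_matrix)
  also have "x v* W = transpose W *v x" by simp
  finally show ?thesis using assms by (simp add: inner_commute)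
qed

lemma eig_finite:
  fixes W :: "real^'n^'n"
  assumes sym: "transpose W = W"
  shows "finite (real_eigenvalues W)"
proof -
  define v where "v l = (SOME v. v \<noteq> 0 \<and> W *v v = l *\<^sub>R v)" for l
  have v: "v l \<noteq> 0 \<and> W *v v l = l *\<^sub>R v l" if "l \<in> real_eigenvalues W" for l
    using that unfolding real_eigenvalues_def v_def by (metis (mono_tags, lifting) someI_ex mem_Collect_eq)
  have orth: "v l \<bullet> v l' = 0" if "l \<in> real_eigenvalues W" "l' \<in> real_eigenvalues W" "l \<noteq> l'" for l l'
  proof -
    have "l * (v l' \<bullet> v l) = v l' \<bullet> (W *v v l)" using v[OF that(1)] by simp
    also have "\<dots> = v l \<bullet> (W *v v l')" by (rule sym_dot[OF sym])
    also have "\<dots> = l' * (v l \<bullet> v l')" using v[OF that(2)] by simp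
    finally have "(l - l') * (v l \<bullet> v l') = 0" by (simp add: inner_commute algebra_simps)
    thus ?thesis using that(3) by simp
  qed
  have inj: "inj_on v (real_eigenvalues W)"
  proof (rule inj_onI)
    fix l l' assume a: "l \<in> real_eigenvalues W" "l' \<in> real_eigenvalues W" "v l = v l'"
    show "l = l'"
    proof (rule ccontr)
      assume "l \<noteq> l'"
      with orth[OF a(1,2)] a(3) have "v l \<bullet> v l = 0" by simp
      thus False using v[OF a(1)] by simp
    qed
  qed
  have "independent (v ` real_eigenvalues W)"
  proof (rule pairwise_orthogonal_independent)
    show "pairwise Linear_Algebra.orthogonal (v ` real_eigenvalues W)"
      unfolding pairwise_def Linear_Algebra.orthogonal_def using orth by auto
    show "0 \<notin> v ` real_eigenvalues W" using v by force
  qed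
  hence "finite (v ` real_eigenvalues W)" by (rule finiteI_independent)
  thus ?thesis using inj finite_imageD by blast
qed

lemma quad_scale: "(c *\<^sub>R x) \<bullet> (W *v (c *\<^sub>R x)) = c^2 * (x \<bullet> (W *v x))"
  for W :: "real^'n^'n"
  by (simp add: matrix_vector_mult_scaleR power2_eq_square)

lemma quad_diff:
  fixes W :: "real^'n^'n"
  assumes sym: "transpose W = W"
  shows "(a - b) \<bullet> (W *v (a - b)) = a \<bullet> (W *v a) - 2 * (b \<bullet> (W *v a)) + b \<bullet> (W *v b)"
proof -
  have "(a - b) \<bullet> (W *v (a - b)) = a \<bullet> (W *v a) - a \<bullet> (W *v b) - b \<bullet> (W *v a) + b \<bullet> (W *v b)"
    by (simp add: matrix_vector_mult_diff_distrib inner_diff_left inner_diff_right)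
  also have "a \<bullet> (W *v b) = b \<bullet> (W *v a)" by (rule sym_dot[OF sym])
  finally show ?thesis by simp
qed

lemma sq_diff: "(a - b) \<bullet> (a - b) = a \<bullet> a - 2 * (b \<bullet> a) + b \<bullet> (b::'a::real_inner)"
  by (simp add: inner_diff_left inner_diff_right inner_commute[of a b])

lemma min_eig_aux:
  fixes W :: "real^'n^'n"
  assumes sym: "transpose W = W"
  shows "\<exists>\<mu>\<in>real_eigenvalues W. (\<forall>l\<in>real_eigenvalues W. \<mu> \<le> l) \<and> (\<forall>x. \<mu> * (x \<bullet> x) \<le> x \<bullet> (W *v x))"
proof -
  define f where "f x = x \<bullet> (W *v x)" for x :: "real^'n"
  have cont: "continuous_on (sphere 0 1) f" unfolding f_def
    by (rule continuous_on_inner[OF continuous_on_id linear_continuous_on[OF matrix_vector_mul_bounded_linear]])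
  have ne: "sphere (0::real^'n) 1 \<noteq> {}" using vector_choose_size[of 1] by (auto simp: sphere_def)
  obtain x0 where x0: "x0 \<in> sphere 0 1" and mn: "\<And>y. y \<in> sphere 0 1 \<Longrightarrow> f x0 \<le> f y"
    using continuous_attains_inf[OF compact_sphere ne cont] by blast
  define \<mu> where "\<mu> = f x0"
  have nx0: "x0 \<bullet> x0 = 1" using x0 by (simp add: dot_square_norm)
  have ray: "\<mu> * (y \<bullet> y) \<le> f y" for y
  proof (cases "y = 0")
    case True thus ?thesis by (simp add: f_def)
  next
    case False
    define c where "c = 1 / norm y"
    have cy: "c *\<^sub>R y \<in> sphere 0 1" using False by (simp add: c_def)
    have "\<mu> \<le> f (c *\<^sub>R y)" using mn[OF cy] by (simp add: \<mu>_def)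
    also have "\<dots> = c^2 * f y" unfolding f_def by (rule quad_scale)
    finally have "\<mu> \<le> c^2 * f y" .
    hence "\<mu> * (y \<bullet> y) \<le> c^2 * f y * (y \<bullet> y)" by (simp add: mult_right_mono)
    also have "c^2 * f y * (y \<bullet> y) = f y * (c^2 * (y \<bullet> y))" by (simp add: ac_simps)
    also have "c^2 * (y \<bullet> y) = 1" using False by (simp add: c_def dot_square_norm power2_eq_square)
    finally show ?thesis by simp
  qed
  define g where "g = W *v x0 - \<mu> *\<^sub>R x0"
  define c where "c = f g - \<mu> * (g \<bullet> g)"
  have AmB: "g \<bullet> (W *v x0) - \<mu> * (g \<bullet> x0) = g \<bullet> g"
    by (simp add: g_def inner_diff_right)
  have key: "2 * (g \<bullet> g) \<le> s * c" if "s > 0" for s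
  proof -
    define A where "A = g \<bullet> (W *v x0)"
    define B where "B = g \<bullet> x0"
    define G where "G = g \<bullet> g"
    define F where "F = f g"
    have r: "\<mu> * ((x0 - s *\<^sub>R g) \<bullet> (x0 - s *\<^sub>R g)) \<le> f (x0 - s *\<^sub>R g)" by (rule ray)
    have e1: "f (x0 - s *\<^sub>R g) = \<mu> - 2 * s * A + s^2 * F"
      unfolding f_def quad_diff[OF sym] quad_scale by (simp add: power2_eq_square A_def F_def f_def \<mu>_def)
    have e2: "(x0 - s *\<^sub>R g) \<bullet> (x0 - s *\<^sub>R g) = 1 - 2 * s * B + s^2 * G"
      using nx0 unfolding sq_diff by (simp add: power2_eq_square B_def G_def)
    have h1: "\<mu> - 2 * s * (\<mu> * B) + s^2 * (\<mu> * G) \<le> \<mu> - 2 * s * A + s^2 * F"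
      using r unfolding e1 e2 by (simp add: algebra_simps)
    have h2: "A - \<mu> * B = G" using AmB by (simp add: A_def B_def G_def)
    have "2 * s * G \<le> s^2 * (F - \<mu> * G)"
    proof -
      have "2 * s * G = 2 * s * A - 2 * s * (\<mu> * B)" using h2 by (simp add: algebra_simps)
      also have "\<dots> \<le> s^2 * F - s^2 * (\<mu> * G)" using h1 by linarith
      finally show ?thesis by (simp add: algebra_simps)
    qed
    hence "s * (2 * G) \<le> s * (s * c)" by (simp add: c_def F_def G_def power2_eq_square algebra_simps)
    thus ?thesis using that by (simp add: G_def)
  qed
  have "g \<bullet> g = 0"
  proof (rule ccontr)
    assume ne0: "g \<bullet> g \<noteq> 0"
    hence pos: "g \<bullet> g > 0" by (simp add: order_less_le)
    define s where "s = (g \<bullet> g) / (\<bar>c\<bar> + 1)"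
    have sp: "s > 0" using pos by (simp add: s_def)
    have "s * c \<le> s * \<bar>c\<bar>" using sp by (intro mult_left_mono) auto
    also have "\<dots> = (g \<bullet> g) * (\<bar>c\<bar> / (\<bar>c\<bar> + 1))" by (simp add: s_def)
    also have "\<dots> < (g \<bullet> g) * 1"
      using pos by (intro mult_strict_left_mono) auto
    also have "\<dots> = g \<bullet> g" by simp
    finally show False using key[OF sp] pos by simp
  qed
  hence eig: "W *v x0 = \<mu> *\<^sub>R x0" by (simp add: g_def)
  have "x0 \<noteq> 0" using x0 by auto
  hence mem: "\<mu> \<in> real_eigenvalues W" using eig unfolding real_eigenvalues_def by blast
  have low: "\<mu> \<le> l" if "l \<in> real_eigenvalues W" for l
  proof -
    have "\<exists>v. v \<noteq> 0 \<and> W *v v = l *\<^sub>R v" using that by (simp add: real_eigenvalues_def)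
    then obtain v where v: "v \<noteq> 0" "W *v v = l *\<^sub>R v" by blast
    have fv: "f v = l * (v \<bullet> v)" unfolding f_def using v(2) by simp
    have "\<mu> * (v \<bullet> v) \<le> l * (v \<bullet> v)" using ray[of v] unfolding fv .
    moreover have "v \<bullet> v > 0" using v by simp
    ultimately show ?thesis by (rule mult_right_le_imp_le)
  qed
  show ?thesis
  proof (intro bexI[OF _ mem] conjI ballI allI)
    fix l assume "l \<in> real_eigenvalues W" thus "\<mu> \<le> l" by (rule low)
  next
    fix x show "\<mu> * (x \<bullet> x) \<le> x \<bullet> (W *v x)" using ray[of x] unfolding f_def .
  qed
qed

lemma neg_mv: "(- W) *v v = - (W *v v)" for W :: "real^'n^'n"
  by (simp add: matrix_vector_mult_def Finite_Cartesian_Product.vec_eq_iff sum_negf)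

lemma eig_neg_iff: "l \<in> real_eigenvalues (- W) \<longleftrightarrow> - l \<in> real_eigenvalues W"
  for W :: "real^'n^'n"
proof -
  have "(- (W *v v) = l *\<^sub>R v) \<longleftrightarrow> (W *v v = (- l) *\<^sub>R v)" for v
    by (metis minus_minus scaleR_minus_left)
  thus ?thesis unfolding real_eigenvalues_def mem_Collect_eq neg_mv by simp
qed

lemma sym_eig:
  fixes W :: "real^'n^'n"
  assumes sym: "transpose W = W"
  shows "finite (real_eigenvalues W)" "real_eigenvalues W \<noteq> {}"
    "\<And>x. lambda_min W * (x \<bullet> x) \<le> x \<bullet> (W *v x)"
    "\<And>x. x \<bullet> (W *v x) \<le> lambda_max W * (x \<bullet> x)"
    "lambda_min W \<in> real_eigenvalues W" "lambda_max W \<in> real_eigenvalues W"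
    "lambda_min W \<le> lambda_max W"
proof -
  show fin: "finite (real_eigenvalues W)" by (rule eig_finite[OF sym])
  obtain \<mu> where mu1: "\<mu>\<in>real_eigenvalues W" and mu2: "\<forall>l\<in>real_eigenvalues W. \<mu> \<le> l"
     and mu3: "\<forall>x. \<mu> * (x \<bullet> x) \<le> x \<bullet> (W *v x)"
    using min_eig_aux[OF sym] by blast
  show ne: "real_eigenvalues W \<noteq> {}" using mu1 by auto
  have lm: "lambda_min W = \<mu>" unfolding lambda_min_def using mu1 mu2 fin by (intro Min_eqI) auto
  have sym': "transpose (- W) = - W" using sym by (simp add: transpose_def Finite_Cartesian_Product.vec_eq_iff)
  obtain \<nu> where nu1: "\<nu>\<in>real_eigenvalues (-W)" and nu2: "\<forall>l\<in>real_eigenvalues (-W). \<nu> \<le> l"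
     and nu3: "\<forall>x. \<nu> * (x \<bullet> x) \<le> x \<bullet> ((-W) *v x)"
    using min_eig_aux[OF sym'] by blast
  have nu1': "- \<nu> \<in> real_eigenvalues W" using nu1 eig_neg_iff by blast
  have nu2': "l \<le> - \<nu>" if "l \<in> real_eigenvalues W" for l
  proof -
    have "- l \<in> real_eigenvalues (- W)" using that eig_neg_iff[of "- l" W] by simp
    thus ?thesis using nu2 by fastforce
  qed
  have lM: "lambda_max W = - \<nu>" unfolding lambda_max_def using nu1' nu2' fin by (intro Max_eqI) auto
  show "\<And>x. lambda_min W * (x \<bullet> x) \<le> x \<bullet> (W *v x)" using mu3 lm by auto
  show "\<And>x. x \<bullet> (W *v x) \<le> lambda_max W * (x \<bullet> x)"
  proof -
    fix x
    have "\<nu> * (x \<bullet> x) \<le> - (x \<bullet> (W *v x))" using nu3 by (simp add: neg_mv)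
    thus "x \<bullet> (W *v x) \<le> lambda_max W * (x \<bullet> x)" unfolding lM by simp
  qed
  show "lambda_min W \<in> real_eigenvalues W" using mu1 lm by simp
  show "lambda_max W \<in> real_eigenvalues W" using nu1' lM by simp
  show "lambda_min W \<le> lambda_max W" using fin ne unfolding lambda_min_def lambda_max_def by simp
qed




lemma line_deriv:
  fixes u :: "'a::real_normed_vector \<Rightarrow> real"
  assumes "(u has_derivative (\<lambda>h. G h)) (at (c + t *\<^sub>R v))"
  shows "((\<lambda>t. u (c + t *\<^sub>R v)) has_derivative (\<lambda>d. G (d *\<^sub>R v))) (at t)"
proof -
  have f: "((\<lambda>t. c + t *\<^sub>R v) has_derivative (\<lambda>d. d *\<^sub>R v)) (at t)"
    by (auto intro!: derivative_eq_intros)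
  have "((u \<circ> (\<lambda>t. c + t *\<^sub>R v)) has_derivative ((\<lambda>h. G h) \<circ> (\<lambda>d. d *\<^sub>R v))) (at t)"
    by (rule diff_chain_at[OF f]) (use assms in simp)
  thus ?thesis by (simp add: o_def)
qed

lemma schwarz_phi:
  fixes u :: "real^'n \<Rightarrow> real" and Du :: "real^'n \<Rightarrow> real^'n"
  assumes D1: "\<And>y. y \<in> ball x r \<Longrightarrow> (u has_derivative (\<lambda>h. Du y \<bullet> h)) (at y)"
    and est: "\<And>y. norm (y - x) < d \<Longrightarrow> norm (Du y - Du x - D2 *v (y - x)) \<le> e * norm (y - x)"
    and s: "s > 0" "s * (norm h + norm k) < r" "s * (norm h + norm k) < d" and e: "e \<ge> 0"
  shows "\<bar>(u (x + s *\<^sub>R h + s *\<^sub>R k) - u (x + s *\<^sub>R h) - u (x + s *\<^sub>R k) + u x) - s^2 * ((D2 *v h) \<bullet> k)\<bar>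
          \<le> e * s^2 * norm k * (norm h + 2 * norm k)"
proof -
  define v where "v = s *\<^sub>R k"
  define c where "c = x + s *\<^sub>R h"
  define g where "g t = u (c + t *\<^sub>R v) - u (x + t *\<^sub>R v)" for t
  define g' where "g' t = (\<lambda>dd. Du (c + t *\<^sub>R v) \<bullet> (dd *\<^sub>R v) - Du (x + t *\<^sub>R v) \<bullet> (dd *\<^sub>R v))" for t
  have inball: "c + t *\<^sub>R v \<in> ball x r" "x + t *\<^sub>R v \<in> ball x r"
    and inball2: "norm (c + t *\<^sub>R v - x) \<le> s * (norm h + norm k)" "norm (x + t *\<^sub>R v - x) \<le> s * norm k"
    if "0 \<le> t" "t \<le> 1" for t
  proof -
    have nv: "norm (t *\<^sub>R v) \<le> s * norm k" using that s by (simp add: v_def mult_left_le_one_le mult.assoc mult_le_cancel_right1 mult_left_le)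
    have "norm (c + t *\<^sub>R v - x) = norm (s *\<^sub>R h + t *\<^sub>R v)" by (simp add: c_def)
    also have "\<dots> \<le> norm (s *\<^sub>R h) + norm (t *\<^sub>R v)" by (rule norm_triangle_ineq)
    also have "\<dots> \<le> s * norm h + s * norm k" using nv s by simp
    finally show "norm (c + t *\<^sub>R v - x) \<le> s * (norm h + norm k)" by (simp add: algebra_simps)
    thus "c + t *\<^sub>R v \<in> ball x r" using s by (simp add: dist_norm norm_minus_commute)
    show "norm (x + t *\<^sub>R v - x) \<le> s * norm k" using nv by simp
    have "s * norm k \<le> s * (norm h + norm k)" using s by (simp add: mult_left_mono)
    hence "norm (t *\<^sub>R v) < r" using nv s by linarith
    thus "x + t *\<^sub>R v \<in> ball x r" by (simp add: dist_norm)
  qed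
  have der: "(g has_derivative g' t) (at t within {0..1})" if "0 \<le> t" "t \<le> 1" for t
  proof -
    have "(g has_derivative g' t) (at t)"
      unfolding g_def g'_def
      by (intro has_derivative_diff line_deriv D1 inball that)
    thus ?thesis by (rule has_derivative_at_withinI)
  qed
  obtain \<xi> where \<xi>: "\<xi> \<in> {0<..<1}" and mv: "g 1 - g 0 = g' \<xi> (1 - 0)"
    using mvt_simple[of 0 1 g g'] der by auto
  have phi: "u (x + s *\<^sub>R h + s *\<^sub>R k) - u (x + s *\<^sub>R h) - u (x + s *\<^sub>R k) + u x = g 1 - g 0"
    by (simp add: g_def c_def v_def)
  define a where "a = c + \<xi> *\<^sub>R v"
  define b where "b = x + \<xi> *\<^sub>R v"
  have ab: "a - b = s *\<^sub>R h" by (simp add: a_def b_def c_def)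
  have na: "norm (a - x) \<le> s * (norm h + norm k)" and nb: "norm (b - x) \<le> s * norm k"
    using inball2[of \<xi>] \<xi> by (auto simp: a_def b_def)
  define ra where "ra = Du a - Du x - D2 *v (a - x)"
  define rb where "rb = Du b - Du x - D2 *v (b - x)"
  have nra: "norm ra \<le> e * (s * (norm h + norm k))"
  proof -
    have "norm ra \<le> e * norm (a - x)" unfolding ra_def by (rule est) (use na s in linarith)
    also have "\<dots> \<le> e * (s * (norm h + norm k))" using na e by (rule mult_left_mono)
    finally show ?thesis .
  qed
  have nrb: "norm rb \<le> e * (s * norm k)"
  proof -
    have "s * norm k \<le> s * (norm h + norm k)" using s by (simp add: mult_left_mono)
    hence "norm (b - x) < d" using nb s by linarith
    hence "norm rb \<le> e * norm (b - x)" unfolding rb_def by (rule est)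
    also have "\<dots> \<le> e * (s * norm k)" using nb e by (rule mult_left_mono)
    finally show ?thesis .
  qed
  have "Du a - Du b = D2 *v (a - b) + (ra - rb)"
    by (simp add: ra_def rb_def matrix_vector_mult_diff_distrib algebra_simps)
  hence dd: "Du a - Du b = s *\<^sub>R (D2 *v h) + (ra - rb)" by (simp add: ab matrix_vector_mult_scaleR)
  have "g 1 - g 0 = (Du a - Du b) \<bullet> v" using mv by (simp add: g'_def a_def b_def inner_diff_left)
  also have "\<dots> = s^2 * ((D2 *v h) \<bullet> k) + s * ((ra - rb) \<bullet> k)"
    unfolding dd v_def by (simp add: inner_add_left power2_eq_square algebra_simps)
  finally have eq: "g 1 - g 0 - s^2 * ((D2 *v h) \<bullet> k) = s * ((ra - rb) \<bullet> k)" by simp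
  have "\<bar>s * ((ra - rb) \<bullet> k)\<bar> \<le> s * (norm (ra - rb) * norm k)"
    using s by (simp add: abs_mult Cauchy_Schwarz_ineq2 mult_left_mono)
  also have "\<dots> \<le> s * ((e * (s * (norm h + norm k)) + e * (s * norm k)) * norm k)"
  proof -
    have "norm (ra - rb) \<le> norm ra + norm rb" by (rule norm_triangle_ineq4)
    also have "\<dots> \<le> e * (s * (norm h + norm k)) + e * (s * norm k)" using nra nrb by linarith
    finally show ?thesis using s by (intro mult_left_mono mult_right_mono) auto
  qed
  also have "\<dots> = e * s^2 * norm k * (norm h + 2 * norm k)" by (simp add: power2_eq_square algebra_simps)
  finally show ?thesis unfolding phi eq .
qed

lemma schwarz_sym:
  fixes u :: "real^'n \<Rightarrow> real" and Du :: "real^'n \<Rightarrow> real^'n"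
  assumes op: "open \<Omega>" and x: "x \<in> \<Omega>"
    and D1: "\<And>y. y \<in> \<Omega> \<Longrightarrow> (u has_derivative (\<lambda>h. Du y \<bullet> h)) (at y)"
    and D2: "(Du has_derivative (\<lambda>h. D2 *v h)) (at x)"
  shows "(D2 *v h) \<bullet> k = (D2 *v k) \<bullet> h"
proof -
  obtain r where r: "r > 0" "ball x r \<subseteq> \<Omega>" using op x open_contains_ball by blast
  define C where "C = norm k * (norm h + 2 * norm k) + norm h * (norm k + 2 * norm h)"
  have "\<bar>(D2 *v h) \<bullet> k - (D2 *v k) \<bullet> h\<bar> \<le> e * C" if e: "e > 0" for e
  proof -
    obtain d where d: "d > 0" "\<And>y. norm (y - x) < d \<Longrightarrow> norm (Du y - Du x - D2 *v (y - x)) \<le> e * norm (y - x)"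
      using D2 e unfolding has_derivative_at_alt by blast
    define s where "s = min r d / (norm h + norm k + 1)"
    have np: "norm h + norm k + 1 > 0" by (smt (verit) norm_ge_zero)
    have s0: "s > 0" using r d np by (simp add: s_def)
    have "s * (norm h + norm k) < s * (norm h + norm k + 1)" using s0 by simp
    also have "\<dots> = min r d" using np by (simp add: s_def)
    finally have s1: "s * (norm h + norm k) < r" "s * (norm h + norm k) < d" by auto
    have D1': "\<And>y. y \<in> ball x r \<Longrightarrow> (u has_derivative (\<lambda>h. Du y \<bullet> h)) (at y)" using D1 r by blast
    note p1 = schwarz_phi[OF D1' d(2) s0 s1 less_imp_le[OF e]]
    have s1': "s * (norm k + norm h) < r" "s * (norm k + norm h) < d" using s1 by (simp_all add: add.commute)
    note p2 = schwarz_phi[OF D1' d(2) s0 s1' less_imp_le[OF e]]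
    have sym: "u (x + s *\<^sub>R k + s *\<^sub>R h) = u (x + s *\<^sub>R h + s *\<^sub>R k)" by (simp add: algebra_simps)
    have "\<bar>s^2 * ((D2 *v h) \<bullet> k) - s^2 * ((D2 *v k) \<bullet> h)\<bar> \<le> e * s^2 * norm k * (norm h + 2 * norm k) + e * s^2 * norm h * (norm k + 2 * norm h)"
      using p1 p2 sym by (smt (verit))
    also have "\<dots> = s^2 * (e * C)" by (simp add: C_def algebra_simps)
    finally have "s^2 * \<bar>(D2 *v h) \<bullet> k - (D2 *v k) \<bullet> h\<bar> \<le> s^2 * (e * C)"
      by (simp add: abs_mult right_diff_distrib[symmetric])
    thus ?thesis using s0 by simp
  qed
  hence "\<bar>(D2 *v h) \<bullet> k - (D2 *v k) \<bullet> h\<bar> \<le> 0"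
  proof -
    assume H: "\<And>e. e > 0 \<Longrightarrow> \<bar>(D2 *v h) \<bullet> k - (D2 *v k) \<bullet> h\<bar> \<le> e * C"
    have C0: "C \<ge> 0" by (simp add: C_def)
    show ?thesis
    proof (rule field_le_epsilon)
      fix e :: real assume e: "e > 0"
      have "\<bar>(D2 *v h) \<bullet> k - (D2 *v k) \<bullet> h\<bar> \<le> (e / (C + 1)) * C" using H[of "e / (C + 1)"] e C0 by simp
      also have "\<dots> \<le> e" using e C0 by (simp add: field_simps)
      finally show "\<bar>(D2 *v h) \<bullet> k - (D2 *v k) \<bullet> h\<bar> \<le> 0 + e" by simp
    qed
  qed
  thus ?thesis by simp
qed

lemma schwarz_matrix:
  fixes u :: "real^'n \<Rightarrow> real" and Du :: "real^'n \<Rightarrow> real^'n"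
  assumes op: "open \<Omega>" and x: "x \<in> \<Omega>"
    and D1: "\<And>y. y \<in> \<Omega> \<Longrightarrow> (u has_derivative (\<lambda>h. Du y \<bullet> h)) (at y)"
    and D2: "(Du has_derivative (\<lambda>h. D2 *v h)) (at x)"
  shows "transpose D2 = D2"
proof -
  have "D2 $ i $ j = D2 $ j $ i" for i j
  proof -
    have "(D2 *v axis j 1) \<bullet> axis i 1 = (D2 *v axis i 1) \<bullet> axis j 1" by (rule schwarz_sym[OF op x D1 D2])
    thus ?thesis by (simp add: matrix_vector_mult_basis inner_axis column_def)
  qed
  thus ?thesis by (simp add: transpose_def Finite_Cartesian_Product.vec_eq_iff)
qed




definition cm :: "real^'n^'n \<Rightarrow> (nat \<Rightarrow> 'n) \<Rightarrow> nat \<Rightarrow> complex Matrix.mat" where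
  "cm R e k = Matrix.mat k k (\<lambda>(i,j). complex_of_real (R $ e i $ e j))"

lemma cm_carrier: "cm R e k \<in> carrier_mat k k" by (simp add: cm_def)

lemma cm_index: "i < k \<Longrightarrow> j < k \<Longrightarrow> cm R e k $$ (i,j) = complex_of_real (R $ e i $ e j)"
  by (simp add: cm_def)

lemma perm_bij:
  fixes e :: "nat \<Rightarrow> 'n"
  assumes e: "bij_betw e {0..<k} I"
  shows "bij_betw (map_permutation {0..<k} e) {p. p permutes {0..<k}} {q. q permutes I}"
proof (rule bij_betw_byWitness[where f' = "map_permutation I (inv_into {0..<k} e)"])
  have ie: "bij_betw (inv_into {0..<k} e) I {0..<k}" by (rule bij_betw_inv_into[OF e])
  show "\<forall>p\<in>{p. p permutes {0..<k}}. map_permutation I (inv_into {0..<k} e) (map_permutation {0..<k} e p) = p"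
    using e by (auto intro!: map_permutation_compose_inv simp: bij_betw_inv_into_left)
  show "\<forall>q\<in>{q. q permutes I}. map_permutation {0..<k} e (map_permutation I (inv_into {0..<k} e) q) = q"
    using ie e by (auto intro!: map_permutation_compose_inv simp: bij_betw_inv_into_right)
  show "map_permutation {0..<k} e ` {p. p permutes {0..<k}} \<subseteq> {q. q permutes I}"
    using e by (auto intro!: map_permutation_permutes)
  show "map_permutation I (inv_into {0..<k} e) ` {q. q permutes I} \<subseteq> {p. p permutes {0..<k}}"
    using ie by (auto intro!: map_permutation_permutes)
qed

lemma det_cm:
  fixes R :: "real^'n^'n"
  assumes e: "bij_betw e {0..<k} I"
  shows "Determinant.det (cm R e k) = complex_of_real (principal_minor R I)"
proof -
  have inj: "inj_on e {0..<k}" using e by (simp add: bij_betw_def)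
  have "principal_minor R I = (\<Sum>q\<in>{q. q permutes I}. of_int (sign q) * (\<Prod>i\<in>I. R $ i $ q i))"
    by (simp add: principal_minor_def)
  also have "\<dots> = (\<Sum>p\<in>{p. p permutes {0..<k}}. of_int (sign (map_permutation {0..<k} e p)) *
       (\<Prod>i\<in>I. R $ i $ map_permutation {0..<k} e p i))"
    by (rule sum.reindex_bij_betw[OF perm_bij[OF e], symmetric])
  also have "\<dots> = (\<Sum>p\<in>{p. p permutes {0..<k}}. of_int (sign p) * (\<Prod>j=0..<k. R $ e j $ e (p j)))"
  proof (rule sum.cong[OF refl])
    fix p assume p: "p \<in> {p. p permutes {0..<k}}"
    have s: "sign (map_permutation {0..<k} e p) = sign p"
      using p inj by (intro sign_map_permutation) auto
    have "(\<Prod>i\<in>I. R $ i $ map_permutation {0..<k} e p i) = (\<Prod>j\<in>{0..<k}. R $ e j $ map_permutation {0..<k} e p (e j))"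
      by (rule prod.reindex_bij_betw[OF e, symmetric])
    also have "\<dots> = (\<Prod>j=0..<k. R $ e j $ e (p j))"
      by (rule prod.cong[OF refl]) (simp add: map_permutation_apply[OF inj])
    finally show "of_int (sign (map_permutation {0..<k} e p)) * (\<Prod>i\<in>I. R $ i $ map_permutation {0..<k} e p i)
       = of_int (sign p) * (\<Prod>j=0..<k. R $ e j $ e (p j))" using s by simp
  qed
  finally have pm: "principal_minor R I = \<dots>" .
  have "Determinant.det (cm R e k) = (\<Sum>p\<in>{p. p permutes {0..<k}}. signof p * (\<Prod>i=0..<k. cm R e k $$ (i, p i)))"
    by (rule det_def'[OF cm_carrier])
  also have "\<dots> = (\<Sum>p\<in>{p. p permutes {0..<k}}. complex_of_real (of_int (sign p) * (\<Prod>j=0..<k. R $ e j $ e (p j))))"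
  proof (rule sum.cong[OF refl])
    fix p assume p: "p \<in> {p. p permutes {0..<k}}"
    have "(\<Prod>i=0..<k. cm R e k $$ (i, p i)) = (\<Prod>i=0..<k. complex_of_real (R $ e i $ e (p i)))"
      using p by (intro prod.cong refl cm_index) (auto dest: permutes_in_image)
    thus "signof p * (\<Prod>i=0..<k. cm R e k $$ (i, p i)) = complex_of_real (of_int (sign p) * (\<Prod>j=0..<k. R $ e j $ e (p j)))"
      by simp
  qed
  also have "\<dots> = complex_of_real (principal_minor R I)" unfolding pm by simp
  finally show ?thesis .
qed




definition lift :: "(nat \<Rightarrow> 'n) \<Rightarrow> nat \<Rightarrow> (nat \<Rightarrow> real) \<Rightarrow> real^'n" where
  "lift e k xv = (\<chi> i. if i \<in> e ` {0..<k} then xv (inv_into {0..<k} e i) else 0)"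

lemma lift_comp:
  assumes e: "bij_betw e {0..<k} I" and j: "j < k"
  shows "lift e k xv $ e j = xv j"
proof -
  have inj: "inj_on e {0..<k}" using e by (simp add: bij_betw_def)
  thus ?thesis using j by (simp add: lift_def inv_into_f_f)
qed

lemma lift_out:
  assumes e: "bij_betw e {0..<k} I" and i: "i \<notin> I"
  shows "lift e k xv $ i = 0"
  using e i by (auto simp: lift_def bij_betw_def)

lemma sum_lift:
  fixes f :: "'n::finite \<Rightarrow> real" and k :: nat
  assumes e: "bij_betw e {0..<k} I" and z: "\<And>i. i \<notin> I \<Longrightarrow> f i = 0"
  shows "(\<Sum>i\<in>UNIV. f i) = (\<Sum>j<k. f (e j))"
proof -
  have "(\<Sum>i\<in>UNIV. f i) = (\<Sum>i\<in>I. f i)"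
    by (rule sum.mono_neutral_right) (auto simp: z)
  also have "\<dots> = (\<Sum>j\<in>{0..<k}. f (e j))" by (rule sum.reindex_bij_betw[OF e, symmetric])
  also have "\<dots> = (\<Sum>j<k. f (e j))" by (rule sum.cong) auto
  finally show ?thesis .
qed

lemma lift_bilin:
  fixes R :: "real^'n^'n"
  assumes e: "bij_betw e {0..<k} I"
  shows "lift e k xv \<bullet> (R *v lift e k yv) = (\<Sum>j<k. \<Sum>l<k. xv j * R $ e j $ e l * yv l)"
proof -
  have inner: "(R *v lift e k yv) $ i = (\<Sum>l<k. R $ i $ e l * yv l)" for i
  proof -
    have "(R *v lift e k yv) $ i = (\<Sum>i'\<in>UNIV. R $ i $ i' * lift e k yv $ i')"
      by (simp add: matrix_vector_mult_def)
    also have "\<dots> = (\<Sum>l<k. R $ i $ e l * lift e k yv $ e l)"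
      by (rule sum_lift[OF e]) (simp add: lift_out[OF e])
    also have "\<dots> = (\<Sum>l<k. R $ i $ e l * yv l)"
      by (rule sum.cong[OF refl]) (simp add: lift_comp[OF e])
    finally show ?thesis .
  qed
  have "lift e k xv \<bullet> (R *v lift e k yv) = (\<Sum>i\<in>UNIV. lift e k xv $ i * (R *v lift e k yv) $ i)"
    by (simp add: inner_vec_def)
  also have "\<dots> = (\<Sum>j<k. lift e k xv $ e j * (R *v lift e k yv) $ e j)"
    by (rule sum_lift[OF e]) (simp add: lift_out[OF e])
  also have "\<dots> = (\<Sum>j<k. xv j * (\<Sum>l<k. R $ e j $ e l * yv l))"
    by (rule sum.cong[OF refl]) (simp add: lift_comp[OF e] inner)
  also have "\<dots> = (\<Sum>j<k. \<Sum>l<k. xv j * R $ e j $ e l * yv l)"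
    by (simp add: sum_distrib_left mult.assoc)
  finally show ?thesis .
qed

lemma lift_sq:
  assumes e: "bij_betw e {0..<k} I"
  shows "lift e k xv \<bullet> lift e k xv = (\<Sum>j<k. (xv j)^2)"
proof -
  have "lift e k xv \<bullet> lift e k xv = (\<Sum>i\<in>UNIV. lift e k xv $ i * lift e k xv $ i)"
    by (simp add: inner_vec_def)
  also have "\<dots> = (\<Sum>j<k. lift e k xv $ e j * lift e k xv $ e j)"
    by (rule sum_lift[OF e]) (simp add: lift_out[OF e])
  also have "\<dots> = (\<Sum>j<k. (xv j)^2)"
    by (rule sum.cong[OF refl]) (simp add: lift_comp[OF e] power2_eq_square)
  finally show ?thesis .
qed

lemma eig_bounds:
  fixes R :: "real^'n^'n"
  assumes e: "bij_betw e {0..<k} I"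
    and a: "poly (char_poly (cm R e k)) a = 0"
  shows "\<exists>X Y :: real^'n. X \<bullet> X + Y \<bullet> Y > 0 \<and> (\<forall>i. i \<notin> I \<longrightarrow> X $ i = 0 \<and> Y $ i = 0) \<and>
     Re a * (X \<bullet> X + Y \<bullet> Y) = X \<bullet> (R *v X) + Y \<bullet> (R *v Y) \<and>
     Im a * (X \<bullet> X + Y \<bullet> Y) = X \<bullet> (R *v Y) - Y \<bullet> (R *v X)"
proof -
  have "eigenvalue (cm R e k) a" using a eigenvalue_root_char_poly[OF cm_carrier] by blast
  then obtain v where ev: "eigenvector (cm R e k) v a" unfolding eigenvalue_def by blast
  hence v: "v \<in> carrier_vec k" "v \<noteq> 0\<^sub>v k" "cm R e k *\<^sub>v v = a \<cdot>\<^sub>v v"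
    unfolding eigenvector_def by (auto simp: cm_def)
  define xv where "xv j = Re (v $ j)" for j
  define yv where "yv j = Im (v $ j)" for j
  define X where "X = lift e k xv"
  define Y where "Y = lift e k yv"
  have comp: "(\<Sum>l<k. complex_of_real (R $ e j $ e l) * v $ l) = a * v $ j" if j: "j < k" for j
  proof -
    have "(cm R e k *\<^sub>v v) $ j = a * v $ j" using v j by simp
    moreover have "(cm R e k *\<^sub>v v) $ j = (\<Sum>l<k. complex_of_real (R $ e j $ e l) * v $ l)"
      using j v(1) by (simp add: cm_def scalar_prod_def lessThan_atLeast0)
    ultimately show ?thesis by simp
  qed
  define S where "S = (\<Sum>j<k. cnj (v $ j) * (\<Sum>l<k. complex_of_real (R $ e j $ e l) * v $ l))"
  have S1: "S = a * (\<Sum>j<k. cnj (v $ j) * v $ j)"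
  proof -
    have "S = (\<Sum>j<k. cnj (v $ j) * (a * v $ j))"
      unfolding S_def by (rule sum.cong[OF refl]) (simp add: comp)
    also have "\<dots> = a * (\<Sum>j<k. cnj (v $ j) * v $ j)" by (simp add: sum_distrib_left ac_simps)
    finally show ?thesis .
  qed
  have nn: "(\<Sum>j<k. cnj (v $ j) * v $ j) = complex_of_real (X \<bullet> X + Y \<bullet> Y)"
  proof -
    have "cnj z * z = complex_of_real ((Re z)^2 + (Im z)^2)" for z
      by (simp add: complex_eq_iff power2_eq_square)
    hence "(\<Sum>j<k. cnj (v $ j) * v $ j) = complex_of_real (\<Sum>j<k. (xv j)^2 + (yv j)^2)"
      by (simp add: xv_def yv_def)
    thus ?thesis by (simp add: X_def Y_def lift_sq[OF e] sum.distrib)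
  qed
  have ReS: "Re S = X \<bullet> (R *v X) + Y \<bullet> (R *v Y)"
  proof -
    have "Re S = (\<Sum>j<k. \<Sum>l<k. xv j * R $ e j $ e l * xv l + yv j * R $ e j $ e l * yv l)"
      unfolding S_def sum_distrib_left by (simp add: Re_sum xv_def yv_def algebra_simps)
    thus ?thesis by (simp add: X_def Y_def lift_bilin[OF e] sum.distrib)
  qed
  have ImS: "Im S = X \<bullet> (R *v Y) - Y \<bullet> (R *v X)"
  proof -
    have "Im S = (\<Sum>j<k. \<Sum>l<k. xv j * R $ e j $ e l * yv l - yv j * R $ e j $ e l * xv l)"
      unfolding S_def sum_distrib_left by (simp add: Im_sum xv_def yv_def algebra_simps)
    thus ?thesis by (simp add: X_def Y_def lift_bilin[OF e] sum_subtractf)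
  qed
  have pos: "X \<bullet> X + Y \<bullet> Y > 0"
  proof -
    obtain j where j: "j < k" "v $ j \<noteq> 0"
      using v(1,2) by (metis carrier_vecD eq_vecI index_zero_vec(1) index_zero_vec(2))
    have "0 < (xv j)^2 + (yv j)^2" using j(2) by (simp add: xv_def yv_def complex_eq_iff add_pos_pos sum_power2_gt_zero_iff)
    also have "\<dots> \<le> (\<Sum>j<k. (xv j)^2 + (yv j)^2)"
      using j(1) by (intro member_le_sum) auto
    also have "\<dots> = X \<bullet> X + Y \<bullet> Y" by (simp add: X_def Y_def lift_sq[OF e] sum.distrib)
    finally show ?thesis .
  qed
  have "S = a * complex_of_real (X \<bullet> X + Y \<bullet> Y)" using S1 nn by simp
  hence "Re S = Re a * (X \<bullet> X + Y \<bullet> Y)" "Im S = Im a * (X \<bullet> X + Y \<bullet> Y)" by simp_all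
  moreover have "\<forall>i. i \<notin> I \<longrightarrow> X $ i = 0 \<and> Y $ i = 0" by (simp add: X_def Y_def lift_out[OF e])
  ultimately show ?thesis using pos ReS ImS by metis
qed




lemma neg_mv': "(- W) *v v = - (W *v v)" for W :: "real^'n^'n"
  by (simp add: matrix_vector_mult_def Finite_Cartesian_Product.vec_eq_iff sum_negf)

lemma poly_lin_prod: "poly (\<Prod>a\<leftarrow>as. [:-a, 1:]) x = (\<Prod>a\<leftarrow>as. x - a)" for x :: complex
  by (induct as) (auto simp: algebra_simps)

lemma char_cm:
  fixes R :: "real^'n^'n"
  assumes e: "bij_betw e {0..<k} I"
  shows "poly (char_poly (cm R e k)) (complex_of_real r) =
         complex_of_real (principal_minor (Finite_Cartesian_Product.mat r - R) I)"
proof -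
  have inj: "inj_on e {0..<k}" using e by (simp add: bij_betw_def)
  have "- (char_matrix (cm R e k) (complex_of_real r)) = cm (Finite_Cartesian_Product.mat r - R) e k"
  proof (rule eq_matI)
    fix i j assume i: "i < dim_row (cm (Finite_Cartesian_Product.mat r - R) e k)"
      and j: "j < dim_col (cm (Finite_Cartesian_Product.mat r - R) e k)"
    hence ik: "i < k" and jk: "j < k" by (auto simp: cm_def)
    have eq: "(e i = e j) = (i = j)" using inj ik jk by (auto simp: inj_on_def)
    show "(- char_matrix (cm R e k) (complex_of_real r)) $$ (i, j) = cm (Finite_Cartesian_Product.mat r - R) e k $$ (i, j)"
      using ik jk eq by (simp add: char_matrix_def cm_def Finite_Cartesian_Product.mat_def)
  qed (auto simp: char_matrix_def cm_def)
  thus ?thesis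
    using char_poly_matrix[OF cm_carrier, of R e k "complex_of_real r"] det_cm[OF e] by simp
qed

lemma det_roots:
  fixes N :: "real^'n^'n"
  assumes e: "bij_betw e {0..<k} I"
  shows "\<exists>bs. length bs = k \<and>
     (\<forall>t::real. complex_of_real (principal_minor (N - Finite_Cartesian_Product.mat t) I) = (\<Prod>b\<leftarrow>bs. b - complex_of_real t)) \<and>
     (\<forall>b\<in>set bs. \<exists>X Y :: real^'n. X \<bullet> X + Y \<bullet> Y > 0 \<and> (\<forall>i. i \<notin> I \<longrightarrow> X $ i = 0 \<and> Y $ i = 0) \<and>
        Re b * (X \<bullet> X + Y \<bullet> Y) = X \<bullet> (N *v X) + Y \<bullet> (N *v Y) \<and>
        Im b * (X \<bullet> X + Y \<bullet> Y) = X \<bullet> (N *v Y) - Y \<bullet> (N *v X))"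
proof -
  obtain as where as: "char_poly (cm (- N) e k) = (\<Prod>a\<leftarrow>as. [:-a, 1:])" "length as = k"
    using char_poly_factorized[OF cm_carrier] by blast
  define bs where "bs = map uminus as"
  have len: "length bs = k" using as by (simp add: bs_def)
  have prod: "complex_of_real (principal_minor (N - Finite_Cartesian_Product.mat t) I) = (\<Prod>b\<leftarrow>bs. b - complex_of_real t)" for t
  proof -
    have "Finite_Cartesian_Product.mat (- t) - (- N) = N - Finite_Cartesian_Product.mat t"
      by (simp add: Finite_Cartesian_Product.mat_def Finite_Cartesian_Product.vec_eq_iff)
    hence "complex_of_real (principal_minor (N - Finite_Cartesian_Product.mat t) I) = poly (char_poly (cm (- N) e k)) (complex_of_real (- t))"
      using char_cm[OF e, of "- N" "- t"] by simp
    also have "\<dots> = (\<Prod>a\<leftarrow>as. complex_of_real (- t) - a)" unfolding as(1) poly_lin_prod ..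
    also have "\<dots> = (\<Prod>b\<leftarrow>bs. b - complex_of_real t)" unfolding bs_def by (simp add: o_def) (metis (no_types, opaque_lifting) diff_minus_eq_add minus_diff_eq uminus_add_conv_diff add.commute)
    finally show ?thesis .
  qed
  have roots: "\<exists>X Y :: real^'n. X \<bullet> X + Y \<bullet> Y > 0 \<and> (\<forall>i. i \<notin> I \<longrightarrow> X $ i = 0 \<and> Y $ i = 0) \<and>
        Re b * (X \<bullet> X + Y \<bullet> Y) = X \<bullet> (N *v X) + Y \<bullet> (N *v Y) \<and>
        Im b * (X \<bullet> X + Y \<bullet> Y) = X \<bullet> (N *v Y) - Y \<bullet> (N *v X)" if b: "b \<in> set bs" for b
  proof -
    obtain a where a: "a \<in> set as" "b = - a" using b by (auto simp: bs_def)
    have "poly (char_poly (cm (- N) e k)) a = 0"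
      using a(1) unfolding as(1) poly_lin_prod by (induct as) auto
    from eig_bounds[OF e this] obtain X Y :: "real^'n" where XY: "X \<bullet> X + Y \<bullet> Y > 0"
      "\<forall>i. i \<notin> I \<longrightarrow> X $ i = 0 \<and> Y $ i = 0"
      "Re a * (X \<bullet> X + Y \<bullet> Y) = X \<bullet> (- N *v X) + Y \<bullet> (- N *v Y)"
      "Im a * (X \<bullet> X + Y \<bullet> Y) = X \<bullet> (- N *v Y) - Y \<bullet> (- N *v X)" by blast
    have "Re b * (X \<bullet> X + Y \<bullet> Y) = X \<bullet> (N *v X) + Y \<bullet> (N *v Y)"
      using XY(3) by (simp add: a(2) neg_mv')
    moreover have "Im b * (X \<bullet> X + Y \<bullet> Y) = X \<bullet> (N *v Y) - Y \<bullet> (N *v X)"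
      using XY(4) by (simp add: a(2) neg_mv')
    ultimately show ?thesis using XY(1,2) by blast
  qed
  show ?thesis using len prod roots by blast
qed




lemma mat_mv: "Finite_Cartesian_Product.mat t *v x = t *\<^sub>R (x :: real^'n)"
proof -
  have "(Finite_Cartesian_Product.mat t *v x) $ i = t * x $ i" for i
  proof -
    have "(Finite_Cartesian_Product.mat t *v x) $ i = (\<Sum>j\<in>UNIV. Finite_Cartesian_Product.mat t $ i $ j * x $ j)"
      by (simp add: matrix_vector_mult_def)
    also have "\<dots> = (\<Sum>j\<in>UNIV. if j = i then t * x $ j else 0)"
      by (rule sum.cong) (auto simp: Finite_Cartesian_Product.mat_def)
    also have "\<dots> = t * x $ i" by (simp add: sum.delta)
    finally show ?thesis .
  qed
  thus ?thesis by (simp add: Finite_Cartesian_Product.vec_eq_iff)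
qed

lemma pm_neg: "principal_minor (- R) I = (-1) ^ card I * principal_minor R I" for R :: "real^'n^'n"
  unfolding principal_minor_def sum_distrib_left
  by (rule sum.cong[OF refl]) (simp add: prod_uminus)

lemma pm_roots:
  fixes N :: "real^'n^'n"
  shows "\<exists>bs. length bs = card I \<and>
     (\<forall>t::real. complex_of_real (principal_minor (N - Finite_Cartesian_Product.mat t) I) = (\<Prod>b\<leftarrow>bs. b - complex_of_real t)) \<and>
     (\<forall>b\<in>set bs. \<exists>X Y :: real^'n. X \<bullet> X + Y \<bullet> Y > 0 \<and> (\<forall>i. i \<notin> I \<longrightarrow> X $ i = 0 \<and> Y $ i = 0) \<and>
        Re b * (X \<bullet> X + Y \<bullet> Y) = X \<bullet> (N *v X) + Y \<bullet> (N *v Y) \<and>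
        Im b * (X \<bullet> X + Y \<bullet> Y) = X \<bullet> (N *v Y) - Y \<bullet> (N *v X))"
proof -
  obtain e where "bij_betw e {0..<card I} I" using ex_bij_betw_nat_finite[of I] by auto
  thus ?thesis by (rule det_roots)
qed

lemma pm_prod:
  fixes N :: "real^'n^'n"
  assumes "\<forall>t::real. complex_of_real (principal_minor (N - Finite_Cartesian_Product.mat t) I) = (\<Prod>b\<leftarrow>bs. b - complex_of_real t)"
  shows "complex_of_real (principal_minor N I) = prod_list bs"
  using assms[rule_format, of 0] by simp

lemma prod_low: "(\<forall>b\<in>set bs. c \<le> norm b) \<Longrightarrow> 0 \<le> c \<Longrightarrow> c ^ length bs \<le> norm (prod_list bs)"
  for bs :: "complex list"
  by (induct bs) (auto simp: norm_mult intro!: mult_mono)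

lemma prod_up: "(\<forall>b\<in>set bs. norm b \<le> K) \<Longrightarrow> norm (prod_list bs) \<le> K ^ length bs"
  for bs :: "complex list"
proof (induct bs)
  case Nil thus ?case by simp
next
  case (Cons a bs)
  have K: "0 \<le> K" using Cons(2) by (meson list.set_intros(1) norm_ge_zero order_trans)
  have "norm (prod_list (a # bs)) = norm a * norm (prod_list bs)" by (simp add: norm_mult)
  also have "\<dots> \<le> K * K ^ length bs"
    using Cons K by (intro mult_mono) auto
  finally show ?case by simp
qed

lemma prod_up1: "(\<forall>b\<in>set bs. norm b \<le> K) \<Longrightarrow> b0 \<in> set bs \<Longrightarrow> norm b0 \<le> C \<Longrightarrow> 0 \<le> C \<Longrightarrow>
    norm (prod_list bs) \<le> C * K ^ (length bs - 1)"
  for bs :: "complex list"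
proof (induct bs)
  case Nil thus ?case by simp
next
  case (Cons a bs)
  have K: "0 \<le> K" using Cons(2) by (meson list.set_intros(1) norm_ge_zero order_trans)
  show ?case
  proof (cases "a = b0")
    case True
    have "norm (prod_list (a # bs)) = norm a * norm (prod_list bs)" by (simp add: norm_mult)
    also have "\<dots> \<le> C * K ^ length bs"
      using Cons True by (intro mult_mono prod_up) auto
    finally show ?thesis by simp
  next
    case False
    hence b0: "b0 \<in> set bs" using Cons by simp
    hence "bs \<noteq> []" by auto
    have "norm (prod_list (a # bs)) = norm a * norm (prod_list bs)" by (simp add: norm_mult)
    also have "\<dots> \<le> K * (C * K ^ (length bs - 1))"
      using Cons b0 K by (intro mult_mono) auto
    also have "\<dots> = C * K ^ (length (a # bs) - 1)" using \<open>bs \<noteq> []\<close>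
      by (cases bs) (auto simp: algebra_simps)
    finally show ?thesis .
  qed
qed

lemma prod_realpos: "(\<forall>b\<in>set bs. Im b = 0 \<and> Re b > 0) \<Longrightarrow> Im (prod_list bs) = 0 \<and> Re (prod_list bs) > 0"
  for bs :: "complex list"
  by (induct bs) auto

lemma root_re_low:
  fixes N :: "real^'n^'n" and X Y :: "real^'n"
  assumes XY: "X \<bullet> X + Y \<bullet> Y > 0" "\<forall>i. i \<notin> I \<longrightarrow> X $ i = 0 \<and> Y $ i = 0"
        "Re b * (X \<bullet> X + Y \<bullet> Y) = X \<bullet> (N *v X) + Y \<bullet> (N *v Y)"
    and low: "\<And>x. (\<forall>i. i \<notin> I \<longrightarrow> x $ i = 0) \<Longrightarrow> c * (x \<bullet> x) \<le> x \<bullet> (N *v x)"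
  shows "c \<le> Re b"
proof -
  have "c * (X \<bullet> X + Y \<bullet> Y) \<le> Re b * (X \<bullet> X + Y \<bullet> Y)"
    using low[of X] low[of Y] XY(2,3) by (simp add: distrib_left)
  thus ?thesis using XY(1) by (rule mult_right_le_imp_le)
qed

lemma root_re_up:
  fixes N :: "real^'n^'n" and X Y :: "real^'n"
  assumes XY: "X \<bullet> X + Y \<bullet> Y > 0" "\<forall>i. i \<notin> I \<longrightarrow> X $ i = 0 \<and> Y $ i = 0"
        "Re b * (X \<bullet> X + Y \<bullet> Y) = X \<bullet> (N *v X) + Y \<bullet> (N *v Y)"
    and up: "\<And>x. (\<forall>i. i \<notin> I \<longrightarrow> x $ i = 0) \<Longrightarrow> x \<bullet> (N *v x) \<le> C * (x \<bullet> x)"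
  shows "Re b \<le> C"
proof -
  have "Re b * (X \<bullet> X + Y \<bullet> Y) \<le> C * (X \<bullet> X + Y \<bullet> Y)"
    using up[of X] up[of Y] XY(2,3) by (simp add: distrib_left)
  thus ?thesis using XY(1) by (rule mult_right_le_imp_le)
qed

lemma root_im:
  fixes N :: "real^'n^'n" and X Y :: "real^'n"
  assumes XY: "X \<bullet> X + Y \<bullet> Y > 0" "\<forall>i. i \<notin> I \<longrightarrow> X $ i = 0 \<and> Y $ i = 0"
        "Im b * (X \<bullet> X + Y \<bullet> Y) = X \<bullet> (N *v Y) - Y \<bullet> (N *v X)"
    and anti: "\<And>x y. (\<forall>i. i \<notin> I \<longrightarrow> x $ i = 0) \<Longrightarrow> (\<forall>i. i \<notin> I \<longrightarrow> y $ i = 0) \<Longrightarrow>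
                  \<bar>x \<bullet> (N *v y) - y \<bullet> (N *v x)\<bar> \<le> 2 * \<beta> * norm x * norm y"
    and b0: "\<beta> \<ge> 0"
  shows "\<bar>Im b\<bar> \<le> \<beta>"
proof -
  have "\<bar>Im b\<bar> * (X \<bullet> X + Y \<bullet> Y) = \<bar>X \<bullet> (N *v Y) - Y \<bullet> (N *v X)\<bar>"
    using XY(1,3) by (metis abs_mult abs_of_pos)
  also have "\<dots> \<le> 2 * \<beta> * norm X * norm Y" using anti XY(2) by blast
  also have "\<dots> \<le> \<beta> * (X \<bullet> X + Y \<bullet> Y)"
  proof -
    have "0 \<le> (norm X - norm Y)^2" by simp
    hence "2 * (norm X * norm Y) \<le> (norm X)^2 + (norm Y)^2" by (simp add: power2_diff)
    hence "\<beta> * (2 * (norm X * norm Y)) \<le> \<beta> * ((norm X)^2 + (norm Y)^2)" using b0 by (rule mult_left_mono)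
    thus ?thesis by (simp add: power2_norm_eq_inner algebra_simps)
  qed
  finally show ?thesis using XY(1) by (rule mult_right_le_imp_le)
qed




definition symp :: "real^'n^'n \<Rightarrow> real^'n^'n" where
  "symp N = (1/2) *\<^sub>R (N + transpose N)"

lemma quad_transpose: "x \<bullet> (transpose N *v x) = x \<bullet> (N *v x)" for N :: "real^'n^'n"
proof -
  have "x \<bullet> (transpose N *v x) = x \<bullet> (x v* N)" by simp
  also have "\<dots> = (x v* N) \<bullet> x" by (rule inner_commute)
  also have "\<dots> = x \<bullet> (N *v x)" by (rule dot_lmul_matrix)
  finally show ?thesis .
qed

lemma quad_symp: "x \<bullet> (symp N *v x) = x \<bullet> (N *v x)" for N :: "real^'n^'n"
proof -
  have "symp N *v x = (1/2) *\<^sub>R (N *v x + transpose N *v x)"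
    unfolding symp_def scaleR_matrix_vector_assoc[symmetric] by (simp add: matrix_vector_mult_add_rdistrib)
  thus ?thesis using quad_transpose[of x N] by (simp add: inner_add_right)
qed

lemma symp_sym: "transpose (symp N) = symp N" for N :: "real^'n^'n"
  by (simp add: symp_def transpose_def Finite_Cartesian_Product.vec_eq_iff)

lemma pm_abs_low:
  fixes N :: "real^'n^'n"
  assumes c: "c > 0"
    and low: "\<And>x. (\<forall>i. i \<notin> I \<longrightarrow> x $ i = 0) \<Longrightarrow> c * (x \<bullet> x) \<le> x \<bullet> (N *v x)"
  shows "c ^ card I \<le> \<bar>principal_minor N I\<bar>"
proof -
  obtain bs where bs: "length bs = card I"
    "\<forall>t::real. complex_of_real (principal_minor (N - Finite_Cartesian_Product.mat t) I) = (\<Prod>b\<leftarrow>bs. b - complex_of_real t)"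
    "\<forall>b\<in>set bs. \<exists>X Y :: real^'n. X \<bullet> X + Y \<bullet> Y > 0 \<and> (\<forall>i. i \<notin> I \<longrightarrow> X $ i = 0 \<and> Y $ i = 0) \<and>
        Re b * (X \<bullet> X + Y \<bullet> Y) = X \<bullet> (N *v X) + Y \<bullet> (N *v Y) \<and>
        Im b * (X \<bullet> X + Y \<bullet> Y) = X \<bullet> (N *v Y) - Y \<bullet> (N *v X)"
    using pm_roots[where N=N and I=I] by blast
  have "c \<le> norm b" if b: "b \<in> set bs" for b
  proof -
    obtain X Y :: "real^'n" where XY: "X \<bullet> X + Y \<bullet> Y > 0" "\<forall>i. i \<notin> I \<longrightarrow> X $ i = 0 \<and> Y $ i = 0"
        "Re b * (X \<bullet> X + Y \<bullet> Y) = X \<bullet> (N *v X) + Y \<bullet> (N *v Y)" using bs(3) b by blast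
    have "c \<le> Re b" by (rule root_re_low[OF XY low])
    thus ?thesis using complex_Re_le_cmod[of b] by linarith
  qed
  hence "c ^ length bs \<le> norm (prod_list bs)" using c by (intro prod_low) auto
  also have "prod_list bs = complex_of_real (principal_minor N I)" using pm_prod[OF bs(2)] by simp
  finally show ?thesis using bs(1) by simp
qed

lemma pm_sym_pos:
  fixes N :: "real^'n^'n"
  assumes sym: "transpose N = N" and c: "c > 0"
    and low: "\<And>x. (\<forall>i. i \<notin> I \<longrightarrow> x $ i = 0) \<Longrightarrow> c * (x \<bullet> x) \<le> x \<bullet> (N *v x)"
  shows "principal_minor N I > 0"
proof -
  obtain bs where bs: "length bs = card I"
    "\<forall>t::real. complex_of_real (principal_minor (N - Finite_Cartesian_Product.mat t) I) = (\<Prod>b\<leftarrow>bs. b - complex_of_real t)"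
    "\<forall>b\<in>set bs. \<exists>X Y :: real^'n. X \<bullet> X + Y \<bullet> Y > 0 \<and> (\<forall>i. i \<notin> I \<longrightarrow> X $ i = 0 \<and> Y $ i = 0) \<and>
        Re b * (X \<bullet> X + Y \<bullet> Y) = X \<bullet> (N *v X) + Y \<bullet> (N *v Y) \<and>
        Im b * (X \<bullet> X + Y \<bullet> Y) = X \<bullet> (N *v Y) - Y \<bullet> (N *v X)"
    using pm_roots[where N=N and I=I] by blast
  have "Im b = 0 \<and> Re b > 0" if b: "b \<in> set bs" for b
  proof -
    obtain X Y :: "real^'n" where XY: "X \<bullet> X + Y \<bullet> Y > 0" "\<forall>i. i \<notin> I \<longrightarrow> X $ i = 0 \<and> Y $ i = 0"
        "Re b * (X \<bullet> X + Y \<bullet> Y) = X \<bullet> (N *v X) + Y \<bullet> (N *v Y)"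
        "Im b * (X \<bullet> X + Y \<bullet> Y) = X \<bullet> (N *v Y) - Y \<bullet> (N *v X)" using bs(3) b by blast
    have "c \<le> Re b" by (rule root_re_low[OF XY(1-3) low])
    moreover have "Im b * (X \<bullet> X + Y \<bullet> Y) = 0" using XY(4) sym_dot[OF sym, of X Y] by simp
    ultimately show ?thesis using XY(1) c by simp
  qed
  hence "Im (prod_list bs) = 0 \<and> Re (prod_list bs) > 0" by (intro prod_realpos) auto
  moreover have "prod_list bs = complex_of_real (principal_minor N I)" using pm_prod[OF bs(2)] by simp
  ultimately show ?thesis by simp
qed

lemma pm_cont:
  fixes A D :: "real^'n^'n"
  shows "continuous_on T (\<lambda>t. principal_minor (A + t *\<^sub>R D) I)"
  unfolding principal_minor_def by (intro continuous_intros) 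

lemma pm_lower:
  fixes N :: "real^'n^'n"
  assumes c: "c > 0"
    and low: "\<And>x. (\<forall>i. i \<notin> I \<longrightarrow> x $ i = 0) \<Longrightarrow> c * (x \<bullet> x) \<le> x \<bullet> (N *v x)"
  shows "c ^ card I \<le> principal_minor N I"
proof -
  define S where "S = symp N"
  define f where "f t = principal_minor (S + t *\<^sub>R (N - S)) I" for t :: real
  have quad: "x \<bullet> ((S + t *\<^sub>R (N - S)) *v x) = x \<bullet> (N *v x)" for t x
  proof -
    have "(S + t *\<^sub>R (N - S)) *v x = S *v x + t *\<^sub>R (N *v x - S *v x)"
      by (simp add: matrix_vector_mult_add_rdistrib scaleR_matrix_vector_assoc[symmetric] matrix_vector_mult_diff_rdistrib)
    thus ?thesis using quad_symp[of x N] by (simp add: S_def inner_add_right inner_diff_right)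
  qed
  have absf: "c ^ card I \<le> \<bar>f t\<bar>" for t
    unfolding f_def by (rule pm_abs_low[OF c]) (simp add: quad low)
  have cpos: "c ^ card I > 0" using c by simp
  have f0: "f 0 > 0" unfolding f_def using pm_sym_pos[OF symp_sym[of N] c, of I] low
    by (simp add: S_def quad_symp)
  have f1: "f 1 = principal_minor N I" by (simp add: f_def)
  have "f 1 \<ge> 0"
  proof (rule ccontr)
    assume "\<not> f 1 \<ge> 0"
    hence "f 1 \<le> 0" by simp
    moreover have "continuous_on {0..1} f" unfolding f_def by (rule pm_cont)
    ultimately obtain t where "0 \<le> t" "t \<le> 1" "f t = 0" using IVT2'[of f 1 0 0] f0 by auto
    thus False using absf[of t] cpos by simp
  qed
  thus ?thesis using absf[of 1] f1 by simp
qed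




lemma mat_scale: "Finite_Cartesian_Product.mat t = t *\<^sub>R (Finite_Cartesian_Product.mat 1 :: real^'n^'n)"
  by (simp add: Finite_Cartesian_Product.mat_def Finite_Cartesian_Product.vec_eq_iff)

lemma root_norm:
  fixes b :: complex
  assumes "c \<le> Re b" "Re b \<le> C" "\<bar>Im b\<bar> \<le> \<beta>" "\<beta> \<le> \<delta> * c" "0 < c" "0 \<le> \<delta>"
  shows "norm b \<le> sqrt (1 + \<delta>^2) * C"
proof -
  have C: "0 \<le> C" using assms by linarith
  have "(Im b)^2 \<le> (\<delta> * Re b)^2"
  proof -
    have "\<bar>Im b\<bar> \<le> \<delta> * Re b" using assms by (smt (verit) mult_left_mono)
    hence "\<bar>Im b\<bar>^2 \<le> (\<delta> * Re b)^2" by (rule power_mono) simp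
    thus ?thesis by simp
  qed
  hence "(Re b)^2 + (Im b)^2 \<le> (1 + \<delta>^2) * (Re b)^2" by (simp add: power_mult_distrib algebra_simps)
  also have "\<dots> \<le> (1 + \<delta>^2) * C^2"
    using assms by (intro mult_left_mono power_mono) auto
  finally have "sqrt ((Re b)^2 + (Im b)^2) \<le> sqrt ((1 + \<delta>^2) * C^2)" by (rule real_sqrt_le_mono)
  also have "\<dots> = sqrt (1 + \<delta>^2) * C" using C by (simp add: real_sqrt_mult)
  finally show ?thesis by (simp add: cmod_def)
qed

lemma sqrt_pow_even: "sqrt x ^ (2 * m) = x ^ m" if "x \<ge> 0" for x :: real
  using that by (simp add: power_mult)

lemma pm_upper:
  fixes N :: "real^'n^'n"
  assumes c: "c > 0" and \<delta>: "\<delta> \<ge> 0" and \<beta>: "0 \<le> \<beta>" "\<beta> \<le> \<delta> * c" and cC: "c \<le> C"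
    and low: "\<And>x. (\<forall>i. i \<notin> I \<longrightarrow> x $ i = 0) \<Longrightarrow> c * (x \<bullet> x) \<le> x \<bullet> (N *v x)"
    and up: "\<And>x. (\<forall>i. i \<notin> I \<longrightarrow> x $ i = 0) \<Longrightarrow> x \<bullet> (N *v x) \<le> C * (x \<bullet> x)"
    and anti: "\<And>x y. (\<forall>i. i \<notin> I \<longrightarrow> x $ i = 0) \<Longrightarrow> (\<forall>i. i \<notin> I \<longrightarrow> y $ i = 0) \<Longrightarrow>
                  \<bar>x \<bullet> (N *v y) - y \<bullet> (N *v x)\<bar> \<le> 2 * \<beta> * norm x * norm y"
  shows "principal_minor N I \<le> (1 + \<delta>^2) ^ (card I div 2) * C ^ card I"
proof -
  have pos: "principal_minor N I > 0" using pm_lower[OF c low] c by (smt (verit) zero_less_power)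
  obtain bs where bs: "length bs = card I"
    "\<forall>t::real. complex_of_real (principal_minor (N - Finite_Cartesian_Product.mat t) I) = (\<Prod>b\<leftarrow>bs. b - complex_of_real t)"
    "\<forall>b\<in>set bs. \<exists>X Y :: real^'n. X \<bullet> X + Y \<bullet> Y > 0 \<and> (\<forall>i. i \<notin> I \<longrightarrow> X $ i = 0 \<and> Y $ i = 0) \<and>
        Re b * (X \<bullet> X + Y \<bullet> Y) = X \<bullet> (N *v X) + Y \<bullet> (N *v Y) \<and>
        Im b * (X \<bullet> X + Y \<bullet> Y) = X \<bullet> (N *v Y) - Y \<bullet> (N *v X)"
    using pm_roots[where N=N and I=I] by blast
  have rb: "c \<le> Re b \<and> Re b \<le> C \<and> \<bar>Im b\<bar> \<le> \<beta>" if b: "b \<in> set bs" for b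
  proof -
    obtain X Y :: "real^'n" where XY: "X \<bullet> X + Y \<bullet> Y > 0" "\<forall>i. i \<notin> I \<longrightarrow> X $ i = 0 \<and> Y $ i = 0"
        "Re b * (X \<bullet> X + Y \<bullet> Y) = X \<bullet> (N *v X) + Y \<bullet> (N *v Y)"
        "Im b * (X \<bullet> X + Y \<bullet> Y) = X \<bullet> (N *v Y) - Y \<bullet> (N *v X)" using bs(3) b by blast
    show ?thesis using root_re_low[OF XY(1-3) low] root_re_up[OF XY(1-3) up] root_im[OF XY(1,2,4) anti \<beta>(1)]
      by blast
  qed
  define K where "K = sqrt (1 + \<delta>^2) * C"
  have nb: "norm b \<le> K" if "b \<in> set bs" for b
    unfolding K_def using rb[OF that] \<beta> c \<delta> by (intro root_norm) auto
  have C0: "0 \<le> C" using c cC by linarith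
  have pmn: "principal_minor N I = norm (prod_list bs)"
    using pm_prod[OF bs(2)] pos by (metis norm_of_real abs_of_pos)
  have sq: "sqrt (1 + \<delta>^2) ^ (2 * m) = (1 + \<delta>^2) ^ m" for m
    by (rule sqrt_pow_even) (simp add: add_nonneg_nonneg)
  show ?thesis
  proof (cases "even (card I)")
    case True
    then obtain m where m: "card I = 2 * m" by (auto elim: evenE)
    have "principal_minor N I \<le> K ^ length bs" unfolding pmn using nb by (intro prod_up) auto
    also have "\<dots> = (1 + \<delta>^2) ^ (card I div 2) * C ^ card I"
      unfolding K_def bs(1) power_mult_distrib m using sq by simp
    finally show ?thesis .
  next
    case False
    then obtain m where m: "card I = 2 * m + 1" by (auto elim: oddE)
    \<comment> \<open>existence of a real root\<close>
    define g where "g t = principal_minor (N - Finite_Cartesian_Product.mat t) I" for t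
    define T where "T = C + 1"
    have g0: "g 0 > 0" using pos by (simp add: g_def)
    have gT: "g T < 0"
    proof -
      have "1 ^ card I \<le> principal_minor (Finite_Cartesian_Product.mat T - N) I"
      proof (rule pm_lower)
        fix x :: "real^'n" assume x: "\<forall>i. i \<notin> I \<longrightarrow> x $ i = 0"
        have "x \<bullet> ((Finite_Cartesian_Product.mat T - N) *v x) = T * (x \<bullet> x) - x \<bullet> (N *v x)"
          by (simp add: matrix_vector_mult_diff_rdistrib mat_mv inner_diff_right)
        thus "1 * (x \<bullet> x) \<le> x \<bullet> ((Finite_Cartesian_Product.mat T - N) *v x)"
          using up[OF x] by (simp add: T_def algebra_simps)
      qed simp
      moreover have "g T = (-1) ^ card I * principal_minor (Finite_Cartesian_Product.mat T - N) I"
        unfolding g_def using pm_neg[of "Finite_Cartesian_Product.mat T - N" I] by simp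
      ultimately show ?thesis using m by simp
    qed
    have T0: "0 \<le> T" using C0 by (simp add: T_def)
    have cont: "continuous_on {0..T} g"
    proof -
      have "g = (\<lambda>t. principal_minor (N + t *\<^sub>R (- Finite_Cartesian_Product.mat 1)) I)"
        unfolding g_def by (rule ext) (metis mat_scale scaleR_minus_right diff_conv_add_uminus)
      thus ?thesis using pm_cont[where T="{0..T}" and A=N and D="- Finite_Cartesian_Product.mat 1" and I=I] by simp
    qed
    obtain t0 where t0: "0 \<le> t0" "t0 \<le> T" "g t0 = 0" using IVT2'[of g T 0 0, OF _ _ T0 cont] g0 gT by auto
    have "0 \<in> (\<lambda>b. b - complex_of_real t0) ` set bs"
      using bs(2)[rule_format, of t0] t0(3) by (simp add: g_def prod_list_zero_iff)
    then obtain b0 where b0: "b0 \<in> set bs" "b0 = complex_of_real t0" by auto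
    have nb0: "norm b0 \<le> C" using rb[OF b0(1)] b0(2) t0 by simp
    have "principal_minor N I \<le> C * K ^ (length bs - 1)"
      unfolding pmn by (rule prod_up1[OF _ b0(1) nb0 C0]) (use nb in auto)
    also have "\<dots> = (1 + \<delta>^2) ^ (card I div 2) * C ^ card I"
      unfolding K_def bs(1) power_mult_distrib m using sq by simp
    finally show ?thesis .
  qed
qed




lemma transpose_diff': "transpose (A - B) = transpose A - transpose (B :: real^'n^'n)"
  by (simp add: transpose_def Finite_Cartesian_Product.vec_eq_iff)

lemma skew_quad0:
  fixes Bm :: "real^'n^'n"
  assumes skew: "transpose Bm = - Bm"
  shows "x \<bullet> (Bm *v x) = 0"
proof -
  have "x \<bullet> (Bm *v x) = x \<bullet> (transpose Bm *v x)" by (rule quad_transpose[symmetric])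
  also have "\<dots> = - (x \<bullet> (Bm *v x))" unfolding skew by (simp add: neg_mv)
  finally show ?thesis by simp
qed

lemma skew_dot:
  fixes Bm :: "real^'n^'n"
  assumes skew: "transpose Bm = - Bm"
  shows "y \<bullet> (Bm *v x) = - (x \<bullet> (Bm *v y))"
proof -
  have "x \<bullet> (Bm *v y) = (x v* Bm) \<bullet> y" by (simp add: dot_lmul_matrix)
  also have "x v* Bm = transpose Bm *v x" by simp
  finally have "x \<bullet> (Bm *v y) = (transpose Bm *v x) \<bullet> y" .
  thus ?thesis unfolding skew by (simp add: neg_mv inner_commute)
qed

lemma card_k_subsets: "card {I::'n::finite set. card I = k} = CARD('n) choose k"
  using n_subsets[of "UNIV :: 'n set" k] by simp

lemma point_bounds:
  fixes W Bm :: "real^'n^'n"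
  assumes symW: "transpose W = W" and skew: "transpose Bm = - Bm" and mpos: "0 < lambda_min W"
  shows "real (CARD('n) choose k) * lambda_min W ^ k \<le> S_k k (W - Bm)"
    and "0 \<le> \<delta> \<Longrightarrow> onorm ((*v) Bm) \<le> \<delta> * lambda_min W \<Longrightarrow>
         S_k k (W - Bm) \<le> real (CARD('n) choose k) * ((1 + \<delta>^2) ^ (k div 2) * lambda_max W ^ k)"
proof -
  note E = sym_eig[OF symW]
  define m where "m = lambda_min W"
  define M where "M = lambda_max W"
  have quadN: "x \<bullet> ((W - Bm) *v x) = x \<bullet> (W *v x)" for x
    by (simp add: matrix_vector_mult_diff_rdistrib inner_diff_right skew_quad0[OF skew])
  have low: "m * (x \<bullet> x) \<le> x \<bullet> ((W - Bm) *v x)" for x unfolding quadN m_def by (rule E(3))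
  have up: "x \<bullet> ((W - Bm) *v x) \<le> M * (x \<bullet> x)" for x unfolding quadN M_def by (rule E(4))
  have m0: "m > 0" using mpos by (simp add: m_def)
  have mM: "m \<le> M" using E(7) by (simp add: m_def M_def)
  have "S_k k (W - Bm) = (\<Sum>I\<in>{I::'n set. card I = k}. principal_minor (W - Bm) I)" by (simp add: S_k_def)
  also have "\<dots> \<ge> (\<Sum>I\<in>{I::'n set. card I = k}. m ^ k)"
  proof (rule sum_mono)
    fix I :: "'n set" assume "I \<in> {I. card I = k}"
    hence "card I = k" by simp
    thus "m ^ k \<le> principal_minor (W - Bm) I" using pm_lower[OF m0 low] by blast
  qed
  finally show "real (CARD('n) choose k) * lambda_min W ^ k \<le> S_k k (W - Bm)"
    by (simp add: card_k_subsets m_def)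
  assume \<delta>: "0 \<le> \<delta>" and B\<delta>: "onorm ((*v) Bm) \<le> \<delta> * lambda_min W"
  define \<beta> where "\<beta> = onorm ((*v) Bm)"
  have \<beta>0: "0 \<le> \<beta>" unfolding \<beta>_def by (rule onorm_pos_le) (rule matrix_vector_mul_bounded_linear)
  have anti: "\<bar>x \<bullet> ((W - Bm) *v y) - y \<bullet> ((W - Bm) *v x)\<bar> \<le> 2 * \<beta> * norm x * norm y" for x y
  proof -
    have "x \<bullet> ((W - Bm) *v y) - y \<bullet> ((W - Bm) *v x) = - 2 * (x \<bullet> (Bm *v y))"
      using sym_dot[OF symW, of x y] skew_dot[OF skew, of y x]
      by (simp add: matrix_vector_mult_diff_rdistrib inner_diff_right)
    hence "\<bar>x \<bullet> ((W - Bm) *v y) - y \<bullet> ((W - Bm) *v x)\<bar> = 2 * \<bar>x \<bullet> (Bm *v y)\<bar>" by simp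
    also have "\<dots> \<le> 2 * (norm x * norm (Bm *v y))" using Cauchy_Schwarz_ineq2 by simp
    also have "\<dots> \<le> 2 * (norm x * (\<beta> * norm y))"
      unfolding \<beta>_def using onorm[OF matrix_vector_mul_bounded_linear, of Bm y]
      by (intro mult_left_mono) auto
    finally show ?thesis by (simp add: algebra_simps)
  qed
  have "S_k k (W - Bm) \<le> (\<Sum>I\<in>{I::'n set. card I = k}. (1 + \<delta>^2) ^ (k div 2) * M ^ k)"
    unfolding S_k_def
  proof (rule sum_mono)
    fix I :: "'n set" assume "I \<in> {I. card I = k}"
    hence cI: "card I = k" by simp
    have \<beta>le: "\<beta> \<le> \<delta> * m" using B\<delta> by (simp add: \<beta>_def m_def)
    have "principal_minor (W - Bm) I \<le> (1 + \<delta>^2) ^ (card I div 2) * M ^ card I"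
      by (rule pm_upper[OF m0 \<delta> \<beta>0 \<beta>le mM low up anti])
    thus "principal_minor (W - Bm) I \<le> (1 + \<delta>^2) ^ (k div 2) * M ^ k" using cI by simp
  qed
  thus "S_k k (W - Bm) \<le> real (CARD('n) choose k) * ((1 + \<delta>^2) ^ (k div 2) * lambda_max W ^ k)"
    by (simp add: card_k_subsets M_def)
qed




lemma matrix_onorm_bound: "onorm ((*v) (A::real^'n^'n)) \<le> real CARD('n) * real CARD('n) * norm A"
  by (rule onorm_le_matrix_component) (meson component_le_norm_cart Finite_Cartesian_Product.norm_nth_le order_trans)

lemma eig_abs_bound:
  fixes W :: "real^'n^'n"
  assumes sym: "transpose W = W"
  shows "\<bar>lambda_min W\<bar> \<le> real CARD('n) * real CARD('n) * norm W"
proof -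
  have "lambda_min W \<in> real_eigenvalues W" by (rule sym_eig(5)[OF sym])
  then obtain v where v: "v \<noteq> 0" "W *v v = lambda_min W *\<^sub>R v" unfolding real_eigenvalues_def by blast
  have "\<bar>lambda_min W\<bar> * norm v = norm (W *v v)" using v(2) by simp
  also have "\<dots> \<le> onorm ((*v) W) * norm v" by (rule onorm[OF matrix_vector_mul_bounded_linear])
  finally have "\<bar>lambda_min W\<bar> \<le> onorm ((*v) W)" using v(1) by simp
  also have "\<dots> \<le> real CARD('n) * real CARD('n) * norm W" by (rule matrix_onorm_bound)
  finally show ?thesis .
qed

theorem proposition1p7:
  fixes \<Omega> :: "(real^'n) set"
    and k :: nat
    and A B :: "real^'n \<Rightarrow> real \<Rightarrow> real^'n \<Rightarrow> real^'n^'n"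
    and f :: "real^'n \<Rightarrow> real \<Rightarrow> real^'n \<Rightarrow> real"
    and u :: "real^'n \<Rightarrow> real"
    and Du :: "real^'n \<Rightarrow> real^'n"
    and D2u :: "real^'n \<Rightarrow> real^'n^'n"
    and M0 M1 f0 f1 :: real
  assumes k: "2 \<le> k" "k \<le> CARD('n)"
    and dom: "open \<Omega>" "connected \<Omega>" "\<Omega> \<noteq> {}" "bounded \<Omega>"
    and A_cont: "continuous_on (closure \<Omega> \<times> UNIV \<times> UNIV) (\<lambda>(x, z, p). A x z p)"
    and A_sym: "\<And>x z p. x \<in> closure \<Omega> \<Longrightarrow> transpose (A x z p) = A x z p"
    and f_cont: "continuous_on (closure \<Omega> \<times> UNIV \<times> UNIV) (\<lambda>(x, z, p). f x z p)"
    and f_pos: "\<And>x z p. x \<in> closure \<Omega> \<Longrightarrow> f x z p > 0"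
    and B_cont: "continuous_on (closure \<Omega> \<times> UNIV \<times> UNIV) (\<lambda>(x, z, p). B x z p)"
    and B_bdd: "bounded ((\<lambda>(x, z, p). B x z p) ` (closure \<Omega> \<times> UNIV \<times> UNIV))"
    and B_skew: "\<And>x z p. x \<in> closure \<Omega> \<Longrightarrow> transpose (B x z p) = - B x z p"
    and u_C0: "continuous_on (closure \<Omega>) u"
    and u_D1: "\<And>x. x \<in> \<Omega> \<Longrightarrow> (u has_derivative (\<lambda>h. Du x \<bullet> h)) (at x)"
    and u_C1: "continuous_on (closure \<Omega>) Du"
    and u_D2: "\<And>x. x \<in> \<Omega> \<Longrightarrow> (Du has_derivative (\<lambda>h. D2u x *v h)) (at x)"
    and u_C2: "continuous_on (closure \<Omega>) D2u"
    and strict: "strictly_admissible (closure \<Omega>) (\<lambda>x. D2u x - A x (u x) (Du x))"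
    and eq: "\<And>x. x \<in> closure \<Omega> \<Longrightarrow>
              S_k k (D2u x - A x (u x) (Du x) - B x (u x) (Du x)) = f x (u x) (Du x)"
    and M: "M0 > 0" "M1 > 0"
    and u_bd: "\<And>x. x \<in> closure \<Omega> \<Longrightarrow> \<bar>u x\<bar> \<le> M0"
    and Du_bd: "\<And>x. x \<in> closure \<Omega> \<Longrightarrow> norm (Du x) \<le> M1"
    and f0_def: "f0 = (INF t\<in>{(x, z, p). x \<in> closure \<Omega> \<and> \<bar>z\<bar> \<le> M0 \<and> norm p \<le> M1}.
                         (case t of (x, z, p) \<Rightarrow> f x z p))"
    and f1_def: "f1 = (SUP t\<in>{(x, z, p). x \<in> closure \<Omega> \<and> \<bar>z\<bar> \<le> M0 \<and> norm p \<le> M1}.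
                         (case t of (x, z, p) \<Rightarrow> f x z p))"
  shows "(\<forall>x\<in>closure \<Omega>.
           0 < lambda_min (D2u x - A x (u x) (Du x)) \<and>
           lambda_min (D2u x - A x (u x) (Du x)) \<le> root k (f1 / real (CARD('n) choose k))) \<and>
         (\<forall>\<delta>. 0 < \<delta> \<and> \<delta> < 1 \<and>
           delta_admissible \<delta> (closure \<Omega>) (\<lambda>x. D2u x - A x (u x) (Du x)) B \<longrightarrow>
           (\<forall>x\<in>closure \<Omega>.
              root k (f0 / ((1 + \<delta>\<^sup>2) ^ (k div 2) * real (CARD('n) choose k)))
                \<le> lambda_max (D2u x - A x (u x) (Du x)))) \<and>
         (\<forall>g. 0 < g \<and> g < 1 \<and>
           gamma_admissible g (closure \<Omega>) (\<lambda>x. D2u x - A x (u x) (Du x)) \<longrightarrow>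
           (\<forall>x\<in>closure \<Omega>.
              lambda_max (D2u x - A x (u x) (Du x)) \<le> (1 / g) * root k (f1 / real (CARD('n) choose k)))) \<and>
         (\<forall>\<delta> g. 0 < \<delta> \<and> \<delta> < 1 \<and> 0 < g \<and> g < 1 \<and>
           delta_admissible \<delta> (closure \<Omega>) (\<lambda>x. D2u x - A x (u x) (Du x)) B \<and>
           gamma_admissible g (closure \<Omega>) (\<lambda>x. D2u x - A x (u x) (Du x)) \<longrightarrow>
           (\<forall>x\<in>closure \<Omega>.
              g * root k (f0 / ((1 + \<delta>\<^sup>2) ^ (k div 2) * real (CARD('n) choose k)))
                \<le> lambda_min (D2u x - A x (u x) (Du x)) \<and>
              lambda_min (D2u x - A x (u x) (Du x)) \<le> root k (f1 / real (CARD('n) choose k)) \<and>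
              root k (f0 / ((1 + \<delta>\<^sup>2) ^ (k div 2) * real (CARD('n) choose k)))
                \<le> lambda_max (D2u x - A x (u x) (Du x)) \<and>
              lambda_max (D2u x - A x (u x) (Du x)) \<le> (1 / g) * root k (f1 / real (CARD('n) choose k))))"
proof -
  define C where "C = closure \<Omega>"
  define W where "W = (\<lambda>x. D2u x - A x (u x) (Du x))"
  define Bx where "Bx = (\<lambda>x. B x (u x) (Du x))"
  define nck where "nck = real (CARD('n) choose k)"
  define K :: "((real^'n) \<times> real \<times> (real^'n)) set"
    where "K = {(x, z, p). x \<in> closure \<Omega> \<and> \<bar>z\<bar> \<le> M0 \<and> norm p \<le> M1}"
  have k0: "0 < k" using k by simp
  have nck0: "nck > 0" unfolding nck_def using k by simp
  have compC: "compact C" unfolding C_def using dom(4) by (simp add: compact_eq_bounded_closed bounded_closure)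
  \<comment> \<open>symmetry\<close>
  have symD2: "transpose (D2u x) = D2u x" if x: "x \<in> C" for x
  proof -
    have "D2u x $ i $ j - D2u x $ j $ i = 0" for i j
    proof (rule continuous_constant_on_closure[of \<Omega> "\<lambda>x. D2u x $ i $ j - D2u x $ j $ i"])
      show "continuous_on (closure \<Omega>) (\<lambda>x. D2u x $ i $ j - D2u x $ j $ i)"
        by (rule continuous_on_diff[OF continuous_on_component[OF continuous_on_component[OF u_C2]]
              continuous_on_component[OF continuous_on_component[OF u_C2]]])
      show "x \<in> closure \<Omega>" using x by (simp add: C_def)
      fix y assume y: "y \<in> \<Omega>"
      have "transpose (D2u y) = D2u y" by (rule schwarz_matrix[OF dom(1) y u_D1 u_D2[OF y]])
      hence "transpose (D2u y) $ j $ i = D2u y $ j $ i" by simp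
      thus "D2u y $ i $ j - D2u y $ j $ i = 0" by (simp add: transpose_def)
    qed
    thus ?thesis by (simp add: transpose_def Finite_Cartesian_Product.vec_eq_iff)
  qed
  have symW: "transpose (W x) = W x" if x: "x \<in> C" for x
    using symD2[OF x] A_sym[of x] x by (simp add: W_def transpose_diff' C_def)
  have skew: "transpose (Bx x) = - Bx x" if x: "x \<in> C" for x
    using B_skew[of x] x by (simp add: Bx_def C_def)
  \<comment> \<open>continuity and boundedness of W\<close>
  have contW: "continuous_on C W"
  proof -
    have c1: "continuous_on C (\<lambda>x. (x, u x, Du x))" unfolding C_def
      using u_C0 u_C1 by (intro continuous_intros) auto
    have "continuous_on C (\<lambda>x. (\<lambda>(x, z, p). A x z p) (x, u x, Du x))"
      by (rule continuous_on_compose2[OF A_cont c1]) (auto simp: C_def)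
    hence "continuous_on C (\<lambda>x. A x (u x) (Du x))" by simp
    thus ?thesis unfolding W_def using u_C2 by (intro continuous_intros) (auto simp: C_def)
  qed
  obtain BdW where BdW: "\<And>x. x \<in> C \<Longrightarrow> norm (W x) \<le> BdW"
    using compact_imp_bounded[OF compact_continuous_image[OF contW compC]] unfolding bounded_iff by blast
  \<comment> \<open>eigenvalue bounds\<close>
  have lm_bd: "\<bar>lambda_min (W x)\<bar> \<le> real CARD('n) * real CARD('n) * BdW" if x: "x \<in> C" for x
  proof -
    have "\<bar>lambda_min (W x)\<bar> \<le> real CARD('n) * real CARD('n) * norm (W x)" by (rule eig_abs_bound[OF symW[OF x]])
    also have "\<dots> \<le> real CARD('n) * real CARD('n) * BdW" using BdW[OF x] by (intro mult_left_mono) auto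
    finally show ?thesis .
  qed
  have bddW: "bdd_below ((\<lambda>x. lambda_min (W x)) ` C)"
    using lm_bd by (intro bdd_belowI2[of _ "- (real CARD('n) * real CARD('n) * BdW)"]) (smt (verit))
  have lu: "lambda_u C W > 0" using strict unfolding strictly_admissible_def W_def C_def .
  have lu_le: "lambda_u C W \<le> lambda_min (W x)" if x: "x \<in> C" for x
    unfolding lambda_u_def by (rule cINF_lower[OF bddW x])
  have mpos: "lambda_min (W x) > 0" if x: "x \<in> C" for x using lu lu_le[OF x] by linarith
  have mM: "lambda_min (W x) \<le> lambda_max (W x)" if x: "x \<in> C" for x using sym_eig(7)[OF symW[OF x]] .
  have Mpos: "lambda_max (W x) > 0" if x: "x \<in> C" for x using mpos[OF x] mM[OF x] by linarith
  \<comment> \<open>the equation\<close>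
  have Kmem: "(x, u x, Du x) \<in> K" if x: "x \<in> C" for x
    using u_bd[of x] Du_bd[of x] x by (simp add: K_def C_def)
  have eqx: "S_k k (W x - Bx x) = f x (u x) (Du x)" if x: "x \<in> C" for x
    using eq[of x] x by (simp add: W_def Bx_def C_def)
  have compK: "compact K"
  proof -
    have "K = closure \<Omega> \<times> (cball 0 M0 \<times> cball 0 M1)"
      by (auto simp: K_def dist_norm)
    thus ?thesis using compC by (simp add: C_def compact_Times)
  qed
  have contfK: "continuous_on K (\<lambda>t. case t of (x, z, p) \<Rightarrow> f x z p)"
    by (rule continuous_on_subset[OF f_cont]) (auto simp: K_def)
  have bddf: "bdd_above ((\<lambda>t. case t of (x, z, p) \<Rightarrow> f x z p) ` K)"
    by (rule bounded_imp_bdd_above[OF compact_imp_bounded[OF compact_continuous_image[OF contfK compK]]])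
  have bddf0: "bdd_below ((\<lambda>t. case t of (x, z, p) \<Rightarrow> f x z p) ` K)"
    using f_pos by (intro bdd_belowI2[of _ 0]) (auto simp: K_def less_imp_le)
  have f1x: "f x (u x) (Du x) \<le> f1" if x: "x \<in> C" for x
  proof -
    have "(\<lambda>t. case t of (x, z, p) \<Rightarrow> f x z p) (x, u x, Du x) \<le> f1"
      unfolding f1_def K_def[symmetric] by (rule cSUP_upper[OF Kmem[OF x] bddf])
    thus ?thesis by simp
  qed
  have f0x: "f0 \<le> f x (u x) (Du x)" if x: "x \<in> C" for x
  proof -
    have "f0 \<le> (\<lambda>t. case t of (x, z, p) \<Rightarrow> f x z p) (x, u x, Du x)"
      unfolding f0_def K_def[symmetric] by (rule cINF_lower[OF bddf0 Kmem[OF x]])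
    thus ?thesis by simp
  qed
  \<comment> \<open>part (i)\<close>
  have P1: "lambda_min (W x) \<le> root k (f1 / nck)" if x: "x \<in> C" for x
  proof -
    have "nck * lambda_min (W x) ^ k \<le> S_k k (W x - Bx x)"
      unfolding nck_def by (rule point_bounds(1)[OF symW[OF x] skew[OF x] mpos[OF x]])
    also have "\<dots> \<le> f1" using eqx[OF x] f1x[OF x] by simp
    finally have le: "lambda_min (W x) ^ k \<le> f1 / nck" using nck0 by (simp add: field_simps)
    have "lambda_min (W x) = root k (lambda_min (W x) ^ k)"
      by (rule real_root_pos_unique[symmetric]) (use k0 mpos[OF x] in auto)
    also have "\<dots> \<le> root k (f1 / nck)" by (rule real_root_le_mono[OF k0 le])
    finally show ?thesis .
  qed
  \<comment> \<open>part (ii)\<close>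
  have P2: "root k (f0 / ((1 + \<delta>\<^sup>2) ^ (k div 2) * nck)) \<le> lambda_max (W x)"
    if d: "0 < \<delta>" "\<delta> < 1" "delta_admissible \<delta> C W B" and x: "x \<in> C" for \<delta> x
  proof -
    obtain BdB where BdB: "\<And>t::(real^'n) \<times> real \<times> (real^'n). t \<in> C \<times> UNIV \<times> UNIV \<Longrightarrow> norm ((\<lambda>(x, z, p). B x z p) t) \<le> BdB"
      using B_bdd unfolding bounded_iff C_def by blast
    have bddB: "bdd_above ((\<lambda>t. onorm (\<lambda>v. (case t of (x, z, p) \<Rightarrow> B x z p) *v v)) ` (C \<times> UNIV \<times> UNIV))"
    proof (rule bdd_aboveI2)
      fix t :: "(real^'n) \<times> real \<times> (real^'n)" assume t: "t \<in> C \<times> UNIV \<times> UNIV"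
      have "onorm ((*v) ((\<lambda>(x, z, p). B x z p) t)) \<le> real CARD('n) * real CARD('n) * norm ((\<lambda>(x, z, p). B x z p) t)"
        by (rule matrix_onorm_bound)
      also have "\<dots> \<le> real CARD('n) * real CARD('n) * BdB" using BdB[OF t] by (intro mult_left_mono) auto
      finally show "onorm (\<lambda>v. (case t of (x, z, p) \<Rightarrow> B x z p) *v v) \<le> real CARD('n) * real CARD('n) * BdB"
        by (simp add: case_prod_unfold)
    qed
    have "onorm ((*v) (Bx x)) \<le> mu_B (C \<times> UNIV \<times> UNIV) B"
    proof -
      have "(\<lambda>t. onorm (\<lambda>v. (case t of (x, z, p) \<Rightarrow> B x z p) *v v)) (x, u x, Du x) \<le> mu_B (C \<times> UNIV \<times> UNIV) B"
        unfolding mu_B_def by (rule cSUP_upper[OF _ bddB]) (use x in auto)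
      thus ?thesis by (simp add: Bx_def)
    qed
    also have "\<dots> \<le> \<delta> * lambda_u C W" using d(3) by (simp add: delta_admissible_def)
    also have "\<dots> \<le> \<delta> * lambda_min (W x)" using lu_le[OF x] d(1) by simp
    finally have Bd: "onorm ((*v) (Bx x)) \<le> \<delta> * lambda_min (W x)" .
    have "f0 \<le> S_k k (W x - Bx x)" using f0x[OF x] eqx[OF x] by simp
    also have "\<dots> \<le> nck * ((1 + \<delta>^2) ^ (k div 2) * lambda_max (W x) ^ k)"
      unfolding nck_def by (rule point_bounds(2)[OF symW[OF x] skew[OF x] mpos[OF x]]) (use d(1) Bd in auto)
    finally have f0le: "f0 \<le> nck * ((1 + \<delta>^2) ^ (k div 2) * lambda_max (W x) ^ k)" .
    have dpos: "0 < (1 + \<delta>\<^sup>2) ^ (k div 2) * nck" using nck0 by (simp add: add_pos_nonneg)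
    have le: "f0 / ((1 + \<delta>\<^sup>2) ^ (k div 2) * nck) \<le> lambda_max (W x) ^ k"
      unfolding pos_divide_le_eq[OF dpos] using f0le by (simp only: ac_simps)
    have "root k (f0 / ((1 + \<delta>\<^sup>2) ^ (k div 2) * nck)) \<le> root k (lambda_max (W x) ^ k)"
      by (rule real_root_le_mono[OF k0 le])
    also have "root k (lambda_max (W x) ^ k) = lambda_max (W x)"
      by (rule real_root_pos_unique) (use k0 Mpos[OF x] in auto)
    finally show ?thesis .
  qed
  \<comment> \<open>part (iii)\<close>
  have gam: "g * lambda_max (W x) \<le> lambda_min (W x)"
    if gg: "0 < g" "gamma_admissible g C W" and x: "x \<in> C" for g x
  proof -
    have bddg: "bdd_below ((\<lambda>x. lambda_min (W x) / lambda_max (W x)) ` C)"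
      using mpos Mpos by (intro bdd_belowI2[of _ 0]) (auto simp: less_imp_le)
    have "g \<le> gamma_u C W" using gg(2) by (simp add: gamma_admissible_def)
    also have "\<dots> \<le> lambda_min (W x) / lambda_max (W x)"
      unfolding gamma_u_def by (rule cINF_lower[OF bddg x])
    finally show ?thesis using Mpos[OF x] by (simp add: field_simps)
  qed
  have P3: "lambda_max (W x) \<le> (1 / g) * root k (f1 / nck)"
    if gg: "0 < g" "gamma_admissible g C W" and x: "x \<in> C" for g x
  proof -
    have "g * lambda_max (W x) \<le> root k (f1 / nck)" using gam[OF gg x] P1[OF x] by linarith
    thus ?thesis using gg(1) by (simp add: field_simps)
  qed
  have C1: "\<forall>x\<in>C. 0 < lambda_min (W x) \<and> lambda_min (W x) \<le> root k (f1 / nck)"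
    using mpos P1 by blast
  have C2: "\<forall>\<delta>. 0 < \<delta> \<and> \<delta> < 1 \<and> delta_admissible \<delta> C W B \<longrightarrow>
      (\<forall>x\<in>C. root k (f0 / ((1 + \<delta>\<^sup>2) ^ (k div 2) * nck)) \<le> lambda_max (W x))"
    using P2 by blast
  have C3: "\<forall>g. 0 < g \<and> g < 1 \<and> gamma_admissible g C W \<longrightarrow>
      (\<forall>x\<in>C. lambda_max (W x) \<le> 1 / g * root k (f1 / nck))"
    using P3 by blast
  have C4: "\<forall>\<delta> g. 0 < \<delta> \<and> \<delta> < 1 \<and> 0 < g \<and> g < 1 \<and> delta_admissible \<delta> C W B \<and> gamma_admissible g C W \<longrightarrow>
      (\<forall>x\<in>C. g * root k (f0 / ((1 + \<delta>\<^sup>2) ^ (k div 2) * nck)) \<le> lambda_min (W x) \<and>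
              lambda_min (W x) \<le> root k (f1 / nck) \<and>
              root k (f0 / ((1 + \<delta>\<^sup>2) ^ (k div 2) * nck)) \<le> lambda_max (W x) \<and>
              lambda_max (W x) \<le> 1 / g * root k (f1 / nck))"
  proof (intro allI impI ballI)
    fix \<delta> g x assume dg: "0 < \<delta> \<and> \<delta> < 1 \<and> 0 < g \<and> g < 1 \<and> delta_admissible \<delta> C W B \<and> gamma_admissible g C W"
      and x: "x \<in> C"
    have p2: "root k (f0 / ((1 + \<delta>\<^sup>2) ^ (k div 2) * nck)) \<le> lambda_max (W x)" using P2[OF _ _ _ x] dg by blast
    have "g * root k (f0 / ((1 + \<delta>\<^sup>2) ^ (k div 2) * nck)) \<le> g * lambda_max (W x)"
      using p2 dg by (intro mult_left_mono) auto
    also have "\<dots> \<le> lambda_min (W x)" using gam[OF _ _ x] dg by blast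
    finally show "g * root k (f0 / ((1 + \<delta>\<^sup>2) ^ (k div 2) * nck)) \<le> lambda_min (W x) \<and>
              lambda_min (W x) \<le> root k (f1 / nck) \<and>
              root k (f0 / ((1 + \<delta>\<^sup>2) ^ (k div 2) * nck)) \<le> lambda_max (W x) \<and>
              lambda_max (W x) \<le> 1 / g * root k (f1 / nck)"
      using P1[OF x] p2 P3[OF _ _ x] dg by blast
  qed
  have Wx: "\<And>x. D2u x - A x (u x) (Du x) = W x" by (simp add: W_def)
  show ?thesis
    unfolding Wx C_def[symmetric] nck_def[symmetric] using C1 C2 C3 C4 by blast
qed


end
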